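(* Let $k\ge 4$ be an integer and let $T\subset\mathbb R^3$ be a cube of side $h>0$ with faces parallel to the coordinate planes. Let $$V_T=\{v\in Q_k(T):\ \partial_{\mathbf n}v|_F\in Q_{k-1}(F)\ \text{for each of the six faces } F \text{ of } T\}.$$ Consider the following linear functionals on $V_T$: (1) at each of the 8 vertices: the values of $v,\partial_x v,\partial_y v,\partial_z v,\partial_{xy}v,\partial_{xz}v,\partial_{yz}v,\partial_{xyz}v$; (2) on each of the 12 edges: the value of $v$ at the $k-3$ interior points dividing the edge into $k-2$ equal parts; (3) on each of the 12 edges: the values of $\partial_{\mathbf n_1}v$, $\partial_{\mathbf n_2}v$, $\partial_{\mathbf n_1\mathbf n_2}v$ at the $k-4$ interior points dividing the edge into $k-3$ equal parts, where $\mathbf n_1,\mathbf n_2$ are the two coordinate directions orthogonal to the edge; (4) on each of the 6 faces: the value of $v$ at the $(k-3)^2$ interior points of the uniform grid of spacing $h/(k-2)$ on the face; (5) on each of the 6 faces: the value of $\partial_{\mathbf n}v$ ($\mathbf n$ the face normal direction) at the $(k-4)^2$ interior points of the uniform grid of spacing $h/(k-3)$ on the face; (6) the value of $v$ at the $(k-3)^3$ interior points of the uniform grid of spacing $h/(k-2)$ in $T$. Then this set of degrees of freedom uniquely determines a function of $V_T$: for any prescribed values of these functionals there exists exactly one $v\in V_T$ attaining them.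
   Context: $Q_k$ denotes the space of polynomials of degree at most $k$ in each variable separately, i.e. $Q_k=\mathrm{span}\{x^{i}y^{j}z^{l}:0\le i,j,l\le k\}$; on a face $F$ (a square in a coordinate plane) $Q_{k-1}(F)$ denotes the polynomials in the two in-face variables of degree at most $k-1$ in each. $\partial_{\mathbf n}$ on a face is the derivative in the coordinate direction normal to that face; the condition requires its restriction to $F$ to lie in $Q_{k-1}(F)$. *)

theory Defs
  imports "HOL-Analysis.Analysis"
begin

type_synonym fn3 = "real \<Rightarrow> real \<Rightarrow> real \<Rightarrow> real"

definition Qk :: "nat \<Rightarrow> fn3 set" where
  "Qk k = {f. \<exists>c :: nat \<Rightarrow> nat \<Rightarrow> nat \<Rightarrow> real. \<forall>x y z.
      f x y z = (\<Sum>i\<le>k. \<Sum>j\<le>k. \<Sum>l\<le>k. c i j l * x ^ i * y ^ j * z ^ l)}"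

definition Q2 :: "nat \<Rightarrow> (real \<Rightarrow> real \<Rightarrow> real) set" where
  "Q2 m = {p. \<exists>d :: nat \<Rightarrow> nat \<Rightarrow> real. \<forall>s t.
      p s t = (\<Sum>i\<le>m. \<Sum>j\<le>m. d i j * s ^ i * t ^ j)}"

definition dX :: "fn3 \<Rightarrow> fn3" where "dX f = (\<lambda>x y z. deriv (\<lambda>t. f t y z) x)"
definition dY :: "fn3 \<Rightarrow> fn3" where "dY f = (\<lambda>x y z. deriv (\<lambda>t. f x t z) y)"
definition dZ :: "fn3 \<Rightarrow> fn3" where "dZ f = (\<lambda>x y z. deriv (\<lambda>t. f x y t) z)"

definition VT :: "nat \<Rightarrow> real \<Rightarrow> real \<Rightarrow> real \<Rightarrow> real \<Rightarrow> fn3 set" where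
  "VT k a b c h = {v \<in> Qk k.
     (\<forall>x0\<in>{a, a+h}. \<exists>p\<in>Q2 (k-1). \<forall>y\<in>{b..b+h}. \<forall>z\<in>{c..c+h}. dX v x0 y z = p y z) \<and>
     (\<forall>y0\<in>{b, b+h}. \<exists>p\<in>Q2 (k-1). \<forall>x\<in>{a..a+h}. \<forall>z\<in>{c..c+h}. dY v x y0 z = p x z) \<and>
     (\<forall>z0\<in>{c, c+h}. \<exists>p\<in>Q2 (k-1). \<forall>x\<in>{a..a+h}. \<forall>y\<in>{b..b+h}. dZ v x y z0 = p x y)}"

definition off :: "real \<Rightarrow> nat \<Rightarrow> real list" where
  "off h m = map (\<lambda>j. real j * h / real m) [1..<m]"

definition dofs :: "nat \<Rightarrow> real \<Rightarrow> real \<Rightarrow> real \<Rightarrow> real \<Rightarrow> (fn3 \<Rightarrow> real) list" where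
  "dofs k a b c h =
     \<comment> \<open>(1) vertices\<close>
     concat [[(\<lambda>v. v x y z), (\<lambda>v. dX v x y z), (\<lambda>v. dY v x y z), (\<lambda>v. dZ v x y z),
              (\<lambda>v. dX (dY v) x y z), (\<lambda>v. dX (dZ v) x y z), (\<lambda>v. dY (dZ v) x y z),
              (\<lambda>v. dX (dY (dZ v)) x y z)].
             x \<leftarrow> [a, a+h], y \<leftarrow> [b, b+h], z \<leftarrow> [c, c+h]]
   \<comment> \<open>(2) edge values\<close>
   @ [(\<lambda>v. v (a+t) y z). y \<leftarrow> [b, b+h], z \<leftarrow> [c, c+h], t \<leftarrow> off h (k-2)]
   @ [(\<lambda>v. v x (b+t) z). x \<leftarrow> [a, a+h], z \<leftarrow> [c, c+h], t \<leftarrow> off h (k-2)]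
   @ [(\<lambda>v. v x y (c+t)). x \<leftarrow> [a, a+h], y \<leftarrow> [b, b+h], t \<leftarrow> off h (k-2)]
   \<comment> \<open>(3) edge normal derivatives\<close>
   @ concat [[(\<lambda>v. dY v (a+t) y z), (\<lambda>v. dZ v (a+t) y z), (\<lambda>v. dY (dZ v) (a+t) y z)].
             y \<leftarrow> [b, b+h], z \<leftarrow> [c, c+h], t \<leftarrow> off h (k-3)]
   @ concat [[(\<lambda>v. dX v x (b+t) z), (\<lambda>v. dZ v x (b+t) z), (\<lambda>v. dX (dZ v) x (b+t) z)].
             x \<leftarrow> [a, a+h], z \<leftarrow> [c, c+h], t \<leftarrow> off h (k-3)]
   @ concat [[(\<lambda>v. dX v x y (c+t)), (\<lambda>v. dY v x y (c+t)), (\<lambda>v. dX (dY v) x y (c+t))].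
             x \<leftarrow> [a, a+h], y \<leftarrow> [b, b+h], t \<leftarrow> off h (k-3)]
   \<comment> \<open>(4) face values\<close>
   @ [(\<lambda>v. v x (b+s) (c+t)). x \<leftarrow> [a, a+h], s \<leftarrow> off h (k-2), t \<leftarrow> off h (k-2)]
   @ [(\<lambda>v. v (a+s) y (c+t)). y \<leftarrow> [b, b+h], s \<leftarrow> off h (k-2), t \<leftarrow> off h (k-2)]
   @ [(\<lambda>v. v (a+s) (b+t) z). z \<leftarrow> [c, c+h], s \<leftarrow> off h (k-2), t \<leftarrow> off h (k-2)]
   \<comment> \<open>(5) face normal derivatives\<close>
   @ [(\<lambda>v. dX v x (b+s) (c+t)). x \<leftarrow> [a, a+h], s \<leftarrow> off h (k-3), t \<leftarrow> off h (k-3)]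
   @ [(\<lambda>v. dY v (a+s) y (c+t)). y \<leftarrow> [b, b+h], s \<leftarrow> off h (k-3), t \<leftarrow> off h (k-3)]
   @ [(\<lambda>v. dZ v (a+s) (b+t) z). z \<leftarrow> [c, c+h], s \<leftarrow> off h (k-3), t \<leftarrow> off h (k-3)]
   \<comment> \<open>(6) interior values\<close>
   @ [(\<lambda>v. v (a+r) (b+s) (c+t)). r \<leftarrow> off h (k-2), s \<leftarrow> off h (k-2), t \<leftarrow> off h (k-2)]"

end

theory Submission
  imports Defs "HOL-Computational_Algebra.Polynomial" "Jordan_Normal_Form.Determinant"
begin

lemma dbl_root:
  fixes p :: "real poly"
  assumes "poly p x = 0" "poly (pderiv p) x = 0"
  shows "\<exists>q. p = [:-x,1:]^2 * q"
proof -
  from assms(1) obtain q where q: "p = [:-x,1:] * q"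
    by (metis dvdE poly_eq_0_iff_dvd)
  have "poly (pderiv p) x = poly q x" unfolding q pderiv_mult by (simp add: pderiv_pCons)
  with assms(2) have "poly q x = 0" by simp
  then obtain r where r: "q = [:-x,1:] * r" by (metis dvdE poly_eq_0_iff_dvd)
  have "p = [:-x,1:]^2 * r" unfolding q r power2_eq_square by (rule mult.assoc[symmetric])
  thus ?thesis by blast
qed

lemma off_set: "set (off h m) = (\<lambda>j. real j * h / real m) ` {1..<m}"
  by (simp add: off_def)

lemma card_off:
  assumes "h > 0"
  shows "card ((\<lambda>t. a + t) ` set (off h m)) = m - 1"
proof -
  have "(\<lambda>t. a + t) ` set (off h m) = (\<lambda>j. a + real j * h / real m) ` {1..<m}"
    by (auto simp: off_set)
  moreover have "inj_on (\<lambda>j. a + real j * h / real m) {1..<m}"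
    using assms by (auto simp: inj_on_def field_simps)
  ultimately show ?thesis by (simp add: card_image)
qed

lemma off_range:
  assumes "h > 0" "t \<in> set (off h m)"
  shows "0 < t" "t < h"
  using assms by (auto simp: off_set field_simps)

lemma L1:
  fixes p :: "real poly"
  assumes h: "h > 0" and m: "m \<ge> 1" and deg: "degree p \<le> m + 2"
  and p1: "poly p a = 0" and p2: "poly (pderiv p) a = 0"
  and p3: "poly p (a+h) = 0" and p4: "poly (pderiv p) (a+h) = 0"
  and p5: "\<forall>t \<in> set (off h m). poly p (a+t) = 0"
  shows "p = 0"
proof (rule ccontr)
  assume pn: "p \<noteq> 0"
  obtain q1 where q1: "p = [:-a,1:]^2 * q1" using dbl_root[OF p1 p2] by blast
  have "poly p (a+h) = h^2 * poly q1 (a+h)" by (simp add: q1)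
  with p3 h have z1: "poly q1 (a+h) = 0" by simp
  have "pderiv p = [:-a,1:]^2 * pderiv q1 + pderiv ([:-a,1:]^2) * q1"
    unfolding q1 by (simp add: pderiv_mult)
  hence "poly (pderiv p) (a+h) = h^2 * poly (pderiv q1) (a+h)" using z1 by simp
  with p4 h have z2: "poly (pderiv q1) (a+h) = 0" by simp
  obtain q where q: "q1 = [:-(a+h),1:]^2 * q" using dbl_root[OF z1 z2] by blast
  have pq: "p = ([:-a,1:]^2 * [:-(a+h),1:]^2) * q" by (simp add: q1 q mult.assoc)
  have qn: "q \<noteq> 0" using pn pq by auto
  have "degree p = degree ([:-a,1:]^2 * [:-(a+h),1:]^2) + degree q"
    unfolding pq by (rule degree_mult_eq) (use qn in auto)
  also have "degree ([:-a,1:]^2 * [:-(a+h),1:]^2) = 4"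
    by (subst degree_mult_eq) (auto simp: degree_linear_power)
  finally have dq: "degree q + 2 \<le> m" using deg by simp
  have sub: "(\<lambda>t. a + t) ` set (off h m) \<subseteq> {x. poly q x = 0}"
  proof
    fix x assume "x \<in> (\<lambda>t. a + t) ` set (off h m)"
    then obtain t where t: "t \<in> set (off h m)" "x = a + t" by auto
    have "poly p x = 0" using p5 t by auto
    moreover have "poly p x = (t^2 * (t - h)^2) * poly q x" by (simp add: pq t)
    moreover have "t^2 * (t-h)^2 \<noteq> 0" using off_range[OF h t(1)] by simp
    ultimately show "x \<in> {x. poly q x = 0}" by simp
  qed
  have "m - 1 \<le> card {x. poly q x = 0}"
    using card_mono[OF poly_roots_finite[OF qn] sub] card_off[OF h, of a m] by simp
  also have "\<dots> \<le> degree q" by (rule card_poly_roots_bound[OF qn])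
  finally show False using dq by simp
qed


definition ev :: "nat \<Rightarrow> (nat \<Rightarrow> nat \<Rightarrow> nat \<Rightarrow> real) \<Rightarrow> fn3" where
  "ev k C = (\<lambda>x y z. \<Sum>i\<le>k. \<Sum>j\<le>k. \<Sum>l\<le>k. C i j l * x ^ i * y ^ j * z ^ l)"

definition DX :: "nat \<Rightarrow> (nat \<Rightarrow> nat \<Rightarrow> nat \<Rightarrow> real) \<Rightarrow> (nat \<Rightarrow> nat \<Rightarrow> nat \<Rightarrow> real)" where
  "DX k C = (\<lambda>i j l. if i < k then of_nat (Suc i) * C (Suc i) j l else 0)"
definition DY :: "nat \<Rightarrow> (nat \<Rightarrow> nat \<Rightarrow> nat \<Rightarrow> real) \<Rightarrow> (nat \<Rightarrow> nat \<Rightarrow> nat \<Rightarrow> real)" where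
  "DY k C = (\<lambda>i j l. if j < k then of_nat (Suc j) * C i (Suc j) l else 0)"
definition DZ :: "nat \<Rightarrow> (nat \<Rightarrow> nat \<Rightarrow> nat \<Rightarrow> real) \<Rightarrow> (nat \<Rightarrow> nat \<Rightarrow> nat \<Rightarrow> real)" where
  "DZ k C = (\<lambda>i j l. if l < k then of_nat (Suc l) * C i j (Suc l) else 0)"

lemma DYX: "DY k (DX k C) = DX k (DY k C)" by (auto simp: DX_def DY_def fun_eq_iff)
lemma DZX: "DZ k (DX k C) = DX k (DZ k C)" by (auto simp: DX_def DZ_def fun_eq_iff)
lemma DZY: "DZ k (DY k C) = DY k (DZ k C)" by (auto simp: DY_def DZ_def fun_eq_iff)

definition XA :: "nat \<Rightarrow> (nat \<Rightarrow> nat \<Rightarrow> nat \<Rightarrow> real) \<Rightarrow> nat \<Rightarrow> real \<Rightarrow> real \<Rightarrow> real" where "XA k D i y z = (\<Sum>j\<le>k. \<Sum>l\<le>k. D i j l * y^j * z^l)"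
definition YA :: "nat \<Rightarrow> (nat \<Rightarrow> nat \<Rightarrow> nat \<Rightarrow> real) \<Rightarrow> nat \<Rightarrow> real \<Rightarrow> real \<Rightarrow> real" where "YA k D j x z = (\<Sum>i\<le>k. \<Sum>l\<le>k. D i j l * x^i * z^l)"
definition ZA :: "nat \<Rightarrow> (nat \<Rightarrow> nat \<Rightarrow> nat \<Rightarrow> real) \<Rightarrow> nat \<Rightarrow> real \<Rightarrow> real \<Rightarrow> real" where "ZA k D l x y = (\<Sum>i\<le>k. \<Sum>j\<le>k. D i j l * x^i * y^j)"

definition XF :: "nat \<Rightarrow> (nat \<Rightarrow> nat \<Rightarrow> nat \<Rightarrow> real) \<Rightarrow> nat \<Rightarrow> nat \<Rightarrow> real \<Rightarrow> real" where "XF k D j l x = (\<Sum>i\<le>k. D i j l * x^i)"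
definition YF :: "nat \<Rightarrow> (nat \<Rightarrow> nat \<Rightarrow> nat \<Rightarrow> real) \<Rightarrow> nat \<Rightarrow> nat \<Rightarrow> real \<Rightarrow> real" where "YF k D i l y = (\<Sum>j\<le>k. D i j l * y^j)"
definition ZF :: "nat \<Rightarrow> (nat \<Rightarrow> nat \<Rightarrow> nat \<Rightarrow> real) \<Rightarrow> nat \<Rightarrow> nat \<Rightarrow> real \<Rightarrow> real" where "ZF k D i j z = (\<Sum>l\<le>k. D i j l * z^l)"

lemma ev_XA: "ev k D x y z = (\<Sum>i\<le>k. XA k D i y z * x^i)"
  unfolding ev_def XA_def sum_distrib_right
  by (intro sum.cong refl) (simp add: mult_ac)
lemma ev_YA: "ev k D x y z = (\<Sum>j\<le>k. YA k D j x z * y^j)"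
  unfolding ev_def YA_def sum_distrib_right
  by (subst sum.swap) (simp add: mult_ac)
lemma ev_ZA: "ev k D x y z = (\<Sum>l\<le>k. ZA k D l x y * z^l)"
proof -
  have "ev k D x y z = (\<Sum>i\<le>k. \<Sum>l\<le>k. \<Sum>j\<le>k. D i j l * x^i * y^j * z^l)"
    unfolding ev_def by (rule sum.cong[OF refl], rule sum.swap)
  also have "\<dots> = (\<Sum>l\<le>k. \<Sum>i\<le>k. \<Sum>j\<le>k. D i j l * x^i * y^j * z^l)"
    by (rule sum.swap)
  also have "\<dots> = (\<Sum>l\<le>k. ZA k D l x y * z^l)"
    unfolding ZA_def sum_distrib_right by simp
  finally show ?thesis .
qed

lemma XA_DX: "XA k (DX k D) i y z = (if i < k then of_nat (Suc i) * XA k D (Suc i) y z else 0)"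
  by (simp add: XA_def DX_def sum_distrib_left mult_ac)
lemma YA_DY: "YA k (DY k D) j x z = (if j < k then of_nat (Suc j) * YA k D (Suc j) x z else 0)"
  by (simp add: YA_def DY_def sum_distrib_left mult_ac)
lemma ZA_DZ: "ZA k (DZ k D) l x y = (if l < k then of_nat (Suc l) * ZA k D (Suc l) x y else 0)"
  by (simp add: ZA_def DZ_def sum_distrib_left mult_ac)

lemma powsum_deriv:
  "((\<lambda>t. \<Sum>i\<le>k. A i * t^i) has_real_derivative
     (\<Sum>i\<le>k. (if i < k then of_nat (Suc i) * A (Suc i) else 0) * x^i)) (at x)"
proof (induction k)
  case 0
  then show ?case by simp
next
  case (Suc k)
  have p: "((\<lambda>t. A (Suc k) * t^(Suc k)) has_real_derivative A (Suc k) * (of_nat (Suc k) * x^k)) (at x)"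
    using DERIV_cmult[OF DERIV_pow[of "Suc k" x], of "A (Suc k)"] by simp
  have d: "((\<lambda>t. (\<Sum>i\<le>k. A i * t^i) + A (Suc k) * t^(Suc k)) has_real_derivative
     (\<Sum>i\<le>k. (if i < k then of_nat (Suc i) * A (Suc i) else 0) * x^i) + A (Suc k) * (of_nat (Suc k) * x^k)) (at x)"
    by (rule DERIV_add[OF Suc.IH p])
  have e: "(\<Sum>i\<le>k. (if i < k then of_nat (Suc i) * A (Suc i) else 0) * x^i) + A (Suc k) * (of_nat (Suc k) * x^k)
     = (\<Sum>i\<le>Suc k. (if i < Suc k then of_nat (Suc i) * A (Suc i) else 0) * x^i)"
  proof -
    have "(\<Sum>i\<le>k. (if i < k then of_nat (Suc i) * A (Suc i) else 0) * x^i) = (\<Sum>i<k. of_nat (Suc i) * A (Suc i) * x^i)"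
      by (simp add: atMost_Suc lessThan_Suc_atMost[symmetric] sum.If_cases) 
    moreover have "(\<Sum>i\<le>Suc k. (if i < Suc k then of_nat (Suc i) * A (Suc i) else 0) * x^i) = (\<Sum>i<Suc k. of_nat (Suc i) * A (Suc i) * x^i)"
      by (simp add: atMost_Suc lessThan_Suc_atMost[symmetric])
    ultimately show ?thesis by (simp add: mult_ac)
  qed
  show ?case using d unfolding e by simp
qed

lemma dX_ev: "dX (ev k D) = ev k (DX k D)"
proof (intro ext)
  fix x y z
  have "((\<lambda>t. ev k D t y z) has_real_derivative ev k (DX k D) x y z) (at x)"
    unfolding ev_XA[of k D _ y z] ev_XA[of k "DX k D"] XA_DX
    by (rule powsum_deriv)
  thus "dX (ev k D) x y z = ev k (DX k D) x y z" unfolding dX_def by (rule DERIV_imp_deriv)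
qed
lemma dY_ev: "dY (ev k D) = ev k (DY k D)"
proof (intro ext)
  fix x y z
  have "((\<lambda>t. ev k D x t z) has_real_derivative ev k (DY k D) x y z) (at y)"
    unfolding ev_YA[of k D x _ z] ev_YA[of k "DY k D"] YA_DY
    by (rule powsum_deriv)
  thus "dY (ev k D) x y z = ev k (DY k D) x y z" unfolding dY_def by (rule DERIV_imp_deriv)
qed
lemma dZ_ev: "dZ (ev k D) = ev k (DZ k D)"
proof (intro ext)
  fix x y z
  have "((\<lambda>t. ev k D x y t) has_real_derivative ev k (DZ k D) x y z) (at z)"
    unfolding ev_ZA[of k D x y] ev_ZA[of k "DZ k D"] ZA_DZ
    by (rule powsum_deriv)
  thus "dZ (ev k D) x y z = ev k (DZ k D) x y z" unfolding dZ_def by (rule DERIV_imp_deriv)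
qed


definition XP :: "nat \<Rightarrow> (nat \<Rightarrow> nat \<Rightarrow> nat \<Rightarrow> real) \<Rightarrow> real \<Rightarrow> real \<Rightarrow> real poly" where "XP k D y z = (\<Sum>i\<le>k. monom (XA k D i y z) i)"
definition YP :: "nat \<Rightarrow> (nat \<Rightarrow> nat \<Rightarrow> nat \<Rightarrow> real) \<Rightarrow> real \<Rightarrow> real \<Rightarrow> real poly" where "YP k D x z = (\<Sum>j\<le>k. monom (YA k D j x z) j)"
definition ZP :: "nat \<Rightarrow> (nat \<Rightarrow> nat \<Rightarrow> nat \<Rightarrow> real) \<Rightarrow> real \<Rightarrow> real \<Rightarrow> real poly" where "ZP k D x y = (\<Sum>l\<le>k. monom (ZA k D l x y) l)"

lemma poly_XP: "poly (XP k D y z) t = ev k D t y z"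
  by (simp add: XP_def poly_sum poly_monom ev_XA)
lemma poly_YP: "poly (YP k D x z) t = ev k D x t z"
  by (simp add: YP_def poly_sum poly_monom ev_YA)
lemma poly_ZP: "poly (ZP k D x y) t = ev k D x y t"
  by (simp add: ZP_def poly_sum poly_monom ev_ZA)

lemma poly_pderiv_deriv: "poly (pderiv p) x = deriv (poly p) x"
  by (rule DERIV_imp_deriv[symmetric]) (rule poly_DERIV)

lemma pderiv_XP: "poly (pderiv (XP k D y z)) t = ev k (DX k D) t y z"
proof -
  have "poly (XP k D y z) = (\<lambda>t. ev k D t y z)" by (simp add: fun_eq_iff poly_XP)
  thus ?thesis by (simp add: poly_pderiv_deriv dX_ev[symmetric] dX_def)
qed
lemma pderiv_YP: "poly (pderiv (YP k D x z)) t = ev k (DY k D) x t z"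
proof -
  have "poly (YP k D x z) = (\<lambda>t. ev k D x t z)" by (simp add: fun_eq_iff poly_YP)
  thus ?thesis by (simp add: poly_pderiv_deriv dY_ev[symmetric] dY_def)
qed
lemma pderiv_ZP: "poly (pderiv (ZP k D x y)) t = ev k (DZ k D) x y t"
proof -
  have "poly (ZP k D x y) = (\<lambda>t. ev k D x y t)" by (simp add: fun_eq_iff poly_ZP)
  thus ?thesis by (simp add: poly_pderiv_deriv dZ_ev[symmetric] dZ_def)
qed

lemma deg_XP: "degree (XP k D y z) \<le> k"
  unfolding XP_def by (rule degree_sum_le) (auto intro: order.trans[OF degree_monom_le])
lemma deg_YP: "degree (YP k D x z) \<le> k"
  unfolding YP_def by (rule degree_sum_le) (auto intro: order.trans[OF degree_monom_le])
lemma deg_ZP: "degree (ZP k D x y) \<le> k"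
  unfolding ZP_def by (rule degree_sum_le) (auto intro: order.trans[OF degree_monom_le])

lemma coeff_XP: "coeff (XP k D y z) k = XA k D k y z"
  by (simp add: XP_def coeff_sum coeff_monom)
lemma coeff_YP: "coeff (YP k D x z) k = YA k D k x z"
  by (simp add: YP_def coeff_sum coeff_monom)
lemma coeff_ZP: "coeff (ZP k D x y) k = ZA k D k x y"
  by (simp add: ZP_def coeff_sum coeff_monom)

lemma deg_low:
  fixes p :: "real poly"
  assumes "degree p \<le> k" "coeff p k = 0" shows "degree p \<le> k - 1"
proof (cases "degree p = k")
  case True
  then have "p = 0" using assms(2) by (metis leading_coeff_0_iff)
  then show ?thesis by simp
qed (use assms in auto)

lemma XA_YF: "XA k D i y z = (\<Sum>l\<le>k. YF k D i l y * z^l)"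
  unfolding XA_def YF_def by (subst sum.swap) (simp add: sum_distrib_left sum_distrib_right mult_ac)
lemma XA_ZF: "XA k D i y z = (\<Sum>j\<le>k. ZF k D i j z * y^j)"
  unfolding XA_def ZF_def by (intro sum.cong refl) (simp add: sum_distrib_left sum_distrib_right mult_ac)
lemma YA_XF: "YA k D j x z = (\<Sum>l\<le>k. XF k D j l x * z^l)"
  unfolding YA_def XF_def by (subst sum.swap) (simp add: sum_distrib_left sum_distrib_right mult_ac)
lemma YA_ZF: "YA k D j x z = (\<Sum>i\<le>k. ZF k D i j z * x^i)"
  unfolding YA_def ZF_def by (intro sum.cong refl) (simp add: sum_distrib_left sum_distrib_right mult_ac)
lemma ZA_XF: "ZA k D l x y = (\<Sum>j\<le>k. XF k D j l x * y^j)"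
  unfolding ZA_def XF_def by (subst sum.swap) (simp add: sum_distrib_left sum_distrib_right mult_ac)
lemma ZA_YF: "ZA k D l x y = (\<Sum>i\<le>k. YF k D i l y * x^i)"
  unfolding ZA_def YF_def by (intro sum.cong refl) (simp add: sum_distrib_left sum_distrib_right mult_ac)

lemma XF_DY: "XF k (DY k D) j l x = (if j < k then of_nat (Suc j) * XF k D (Suc j) l x else 0)"
  by (simp add: XF_def DY_def sum_distrib_left mult_ac)
lemma XF_DZ: "XF k (DZ k D) j l x = (if l < k then of_nat (Suc l) * XF k D j (Suc l) x else 0)"
  by (simp add: XF_def DZ_def sum_distrib_left mult_ac)
lemma YF_DX: "YF k (DX k D) i l y = (if i < k then of_nat (Suc i) * YF k D (Suc i) l y else 0)"
  by (simp add: YF_def DX_def sum_distrib_left mult_ac)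
lemma YF_DZ: "YF k (DZ k D) i l y = (if l < k then of_nat (Suc l) * YF k D i (Suc l) y else 0)"
  by (simp add: YF_def DZ_def sum_distrib_left mult_ac)
lemma ZF_DX: "ZF k (DX k D) i j z = (if i < k then of_nat (Suc i) * ZF k D (Suc i) j z else 0)"
  by (simp add: ZF_def DX_def sum_distrib_left mult_ac)
lemma ZF_DY: "ZF k (DY k D) i j z = (if j < k then of_nat (Suc j) * ZF k D i (Suc j) z else 0)"
  by (simp add: ZF_def DY_def sum_distrib_left mult_ac)

lemma ev_XF: "ev k D x y z = (\<Sum>j\<le>k. \<Sum>l\<le>k. XF k D j l x * y^j * z^l)"
  unfolding ev_YA YA_XF sum_distrib_right by (intro sum.cong refl) (simp add: mult_ac)
lemma ev_YF: "ev k D x y z = (\<Sum>i\<le>k. \<Sum>l\<le>k. YF k D i l y * x^i * z^l)"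
  unfolding ev_XA XA_YF sum_distrib_right by (intro sum.cong refl) (simp add: mult_ac)
lemma ev_ZF: "ev k D x y z = (\<Sum>i\<le>k. \<Sum>j\<le>k. ZF k D i j z * x^i * y^j)"
  unfolding ev_XA XA_ZF sum_distrib_right by (intro sum.cong refl) (simp add: mult_ac)

definition CondX where "CondX k C x0 = (\<forall>j\<le>k. \<forall>l\<le>k. (j = k \<or> l = k) \<longrightarrow> XF k (DX k C) j l x0 = 0)"
definition CondY where "CondY k C y0 = (\<forall>i\<le>k. \<forall>l\<le>k. (i = k \<or> l = k) \<longrightarrow> YF k (DY k C) i l y0 = 0)"
definition CondZ where "CondZ k C z0 = (\<forall>i\<le>k. \<forall>j\<le>k. (i = k \<or> j = k) \<longrightarrow> ZF k (DZ k C) i j z0 = 0)"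

lemma Q2_I:
  assumes "\<forall>j\<le>k. \<forall>l\<le>k. (j = k \<or> l = k) \<longrightarrow> d j l = 0" "1 \<le> k"
  shows "(\<lambda>s t. \<Sum>j\<le>k. \<Sum>l\<le>k. d j l * s^j * t^l) \<in> Q2 (k-1)"
proof -
  obtain m where k: "k = Suc m" using assms(2) by (cases k) auto
  have z1: "d k l = 0" "d l k = 0" if "l \<le> k" for l using assms(1) that by auto
  have "(\<Sum>j\<le>k. \<Sum>l\<le>k. d j l * s^j * t^l) = (\<Sum>j\<le>k-1. \<Sum>l\<le>k-1. d j l * s^j * t^l)" for s t
  proof -
    have e1: "(\<Sum>l\<le>m. d (Suc m) l * s^(Suc m) * t^l) = 0" by (rule sum.neutral) (auto simp: z1[unfolded k])
    have e2: "(\<Sum>j\<le>m. d j (Suc m) * s^j * t^(Suc m)) = 0" by (rule sum.neutral) (auto simp: z1[unfolded k])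
    have e3: "d (Suc m) (Suc m) = 0" using z1[unfolded k] by auto
    show ?thesis unfolding k using e1 e2 e3 by (simp only: sum.atMost_Suc sum.distrib) simp
  qed
  thus ?thesis unfolding Q2_def by blast
qed

lemma VT_I:
  assumes k: "1 \<le> k" and cx: "CondX k C a" "CondX k C (a+h)" and cy: "CondY k C b" "CondY k C (b+h)"
    and cz: "CondZ k C c" "CondZ k C (c+h)"
  shows "ev k C \<in> VT k a b c h"
proof -
  have q: "ev k C \<in> Qk k" unfolding Qk_def ev_def by blast
  have X: "\<exists>p\<in>Q2 (k-1). \<forall>y\<in>{b..b+h}. \<forall>z\<in>{c..c+h}. dX (ev k C) x0 y z = p y z" if "CondX k C x0" for x0
    using Q2_I[OF that[unfolded CondX_def] k] by (auto simp: dX_ev ev_XF)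
  have Y: "\<exists>p\<in>Q2 (k-1). \<forall>x\<in>{a..a+h}. \<forall>z\<in>{c..c+h}. dY (ev k C) x y0 z = p x z" if "CondY k C y0" for y0
    using Q2_I[OF that[unfolded CondY_def] k] by (auto simp: dY_ev ev_YF)
  have Z: "\<exists>p\<in>Q2 (k-1). \<forall>x\<in>{a..a+h}. \<forall>y\<in>{b..b+h}. dZ (ev k C) x y z0 = p x y" if "CondZ k C z0" for z0
    using Q2_I[OF that[unfolded CondZ_def] k] by (auto simp: dZ_ev ev_ZF)
  show ?thesis unfolding VT_def using q X Y Z cx cy cz by auto
qed

lemma poly1_zero:
  fixes e :: "nat \<Rightarrow> real"
  assumes "infinite Y" "\<forall>y\<in>Y. (\<Sum>j\<le>n. e j * y^j) = 0"
  shows "\<forall>j\<le>n. e j = 0"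
proof -
  let ?p = "\<Sum>j\<le>n. monom (e j) j"
  have "Y \<subseteq> {x. poly ?p x = 0}" using assms(2) by (auto simp: poly_sum poly_monom mult.commute)
  hence "?p = 0" using assms(1) poly_roots_finite finite_subset by blast
  hence "coeff ?p j = 0" for j by simp
  hence "(if j \<le> n then e j else 0) = 0" for j by (simp add: coeff_sum coeff_monom)
  thus ?thesis by (metis (full_types))
qed

lemma poly2_zero:
  fixes E :: "nat \<Rightarrow> nat \<Rightarrow> real"
  assumes "infinite Y" "infinite Z" "\<forall>y\<in>Y. \<forall>z\<in>Z. (\<Sum>j\<le>n. \<Sum>l\<le>n. E j l * y^j * z^l) = 0"
  shows "\<forall>j\<le>n. \<forall>l\<le>n. E j l = 0"
proof -
  have "\<forall>j\<le>n. (\<Sum>l\<le>n. E j l * z^l) = 0" if z: "z \<in> Z" for z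
  proof (rule poly1_zero[OF assms(1)])
    show "\<forall>y\<in>Y. (\<Sum>j\<le>n. (\<Sum>l\<le>n. E j l * z ^ l) * y ^ j) = 0"
      using assms(3) z by (simp add: sum_distrib_left sum_distrib_right mult_ac)
  qed
  hence "\<forall>l\<le>n. E j l = 0" if "j \<le> n" for j
    using poly1_zero[OF assms(2), where n=n and e="E j"] that by auto
  thus ?thesis by auto
qed


lemma sum_trunc:
  assumes "1 \<le> k"
  shows "(\<Sum>j\<le>k. \<Sum>l\<le>k. (if j \<le> k-1 \<and> l \<le> k-1 then d j l else 0) * s^j * t^l)
       = (\<Sum>j\<le>k-1. \<Sum>l\<le>k-1. d j l * s^j * (t::real)^l)"
proof -
  obtain m where k: "k = Suc m" using assms by (cases k) auto
  have e1: "(\<Sum>l\<le>m. (if Suc m \<le> m \<and> l \<le> m then d (Suc m) l else 0) * s^(Suc m) * t^l) = 0"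
    by (rule sum.neutral) auto
  have e2: "(\<Sum>j\<le>m. (if j \<le> m \<and> Suc m \<le> m then d j (Suc m) else 0) * s^j * t^(Suc m)) = 0"
    by (rule sum.neutral) auto
  have e3: "(\<Sum>j\<le>m. \<Sum>l\<le>m. (if j \<le> m \<and> l \<le> m then d j l else 0) * s^j * t^l)
     = (\<Sum>j\<le>m. \<Sum>l\<le>m. d j l * s^j * t^l)"
    by (intro sum.cong refl) auto
  show ?thesis unfolding k using e1 e2 e3 by (simp only: sum.atMost_Suc sum.distrib diff_Suc_1) simp
qed

lemma face_cond:
  assumes k: "1 \<le> k" and Y: "infinite Y" and Z: "infinite Z" and p: "p \<in> Q2 (k-1)"
    and eq: "\<forall>y\<in>Y. \<forall>z\<in>Z. (\<Sum>j\<le>k. \<Sum>l\<le>k. F j l * y^j * z^l) = p y z"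
  shows "\<forall>j\<le>k. \<forall>l\<le>k. (j = k \<or> l = k) \<longrightarrow> F j l = 0"
proof -
  obtain d where d: "\<And>s t. p s t = (\<Sum>j\<le>k-1. \<Sum>l\<le>k-1. d j l * s ^ j * t ^ l)"
    using p unfolding Q2_def by blast
  let ?E = "\<lambda>j l. F j l - (if j \<le> k-1 \<and> l \<le> k-1 then d j l else 0)"
  have "\<forall>y\<in>Y. \<forall>z\<in>Z. (\<Sum>j\<le>k. \<Sum>l\<le>k. ?E j l * y^j * z^l) = 0"
  proof (intro ballI)
    fix y z assume yz: "y \<in> Y" "z \<in> Z"
    have "(\<Sum>j\<le>k. \<Sum>l\<le>k. ?E j l * y^j * z^l) = (\<Sum>j\<le>k. \<Sum>l\<le>k. F j l * y^j * z^l)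
        - (\<Sum>j\<le>k. \<Sum>l\<le>k. (if j \<le> k-1 \<and> l \<le> k-1 then d j l else 0) * y^j * z^l)"
      by (simp add: sum_subtractf left_diff_distrib)
    also have "\<dots> = 0"
    proof -
      have e1: "(\<Sum>j\<le>k. \<Sum>l\<le>k. F j l * y^j * z^l) = p y z" using eq yz by blast
      have e2: "p y z = (\<Sum>j\<le>k. \<Sum>l\<le>k. (if j \<le> k-1 \<and> l \<le> k-1 then d j l else 0) * y^j * z^l)"
        unfolding d by (rule sum_trunc[OF k, symmetric])
      show ?thesis using e1 e2 by simp
    qed
    finally show "(\<Sum>j\<le>k. \<Sum>l\<le>k. ?E j l * y^j * z^l) = 0" .
  qed
  from poly2_zero[OF Y Z this] have "\<forall>j\<le>k. \<forall>l\<le>k. ?E j l = 0" .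
  thus ?thesis using k by auto
qed

lemma VT_D:
  assumes v: "v \<in> VT k a b c h" and h: "h > 0" and k: "1 \<le> k"
  shows "\<exists>C. v = ev k C \<and> CondX k C a \<and> CondX k C (a+h) \<and> CondY k C b \<and> CondY k C (b+h)
           \<and> CondZ k C c \<and> CondZ k C (c+h)"
proof -
  from v have "v \<in> Qk k" unfolding VT_def by auto
  then obtain C where C: "v = ev k C" unfolding Qk_def ev_def by (auto simp: fun_eq_iff)
  have inf: "infinite {u..u+h}" for u using h by (simp add: infinite_Icc)
  have X: "CondX k C x0" if "x0 \<in> {a, a+h}" for x0
  proof -
    from v that obtain p where p: "p \<in> Q2 (k-1)" "\<forall>y\<in>{b..b+h}. \<forall>z\<in>{c..c+h}. dX v x0 y z = p y z"
      unfolding VT_def by blast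
    show ?thesis unfolding CondX_def
      by (rule face_cond[OF k inf inf p(1)]) (use p(2) in \<open>simp add: C dX_ev ev_XF\<close>)
  qed
  have Y: "CondY k C y0" if "y0 \<in> {b, b+h}" for y0
  proof -
    from v that obtain p where p: "p \<in> Q2 (k-1)" "\<forall>x\<in>{a..a+h}. \<forall>z\<in>{c..c+h}. dY v x y0 z = p x z"
      unfolding VT_def by blast
    show ?thesis unfolding CondY_def
      by (rule face_cond[OF k inf inf p(1)]) (use p(2) in \<open>simp add: C dY_ev ev_YF\<close>)
  qed
  have Z: "CondZ k C z0" if "z0 \<in> {c, c+h}" for z0
  proof -
    from v that obtain p where p: "p \<in> Q2 (k-1)" "\<forall>x\<in>{a..a+h}. \<forall>y\<in>{b..b+h}. dZ v x y z0 = p x y"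
      unfolding VT_def by blast
    show ?thesis unfolding CondZ_def
      by (rule face_cond[OF k inf inf p(1)]) (use p(2) in \<open>simp add: C dZ_ev ev_ZF\<close>)
  qed
  show ?thesis using C X Y Z by auto
qed


lemma L1X:
  assumes k: "4 \<le> k" and h: "0 < h" and m: "m = k-2 \<or> (m = k-3 \<and> XA k D k y z = 0)"
    and p: "ev k D a y z = 0" "ev k (DX k D) a y z = 0" "ev k D (a+h) y z = 0" "ev k (DX k D) (a+h) y z = 0"
       "\<forall>t\<in>set (off h m). ev k D (a+t) y z = 0"
  shows "ev k D x y z = 0"
proof -
  have deg: "degree (XP k D y z) \<le> m + 2"
    using m deg_XP[of k D y z] deg_low[OF deg_XP, of k D y z] coeff_XP[of k D y z] k by auto
  have "XP k D y z = 0"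
    by (rule L1[OF h _ deg]) (use m k p in \<open>auto simp: poly_XP pderiv_XP\<close>)
  then show ?thesis using poly_XP[of k D y z x] by simp
qed

lemma L1Y:
  assumes k: "4 \<le> k" and h: "0 < h" and m: "m = k-2 \<or> (m = k-3 \<and> YA k D k x z = 0)"
    and p: "ev k D x b z = 0" "ev k (DY k D) x b z = 0" "ev k D x (b+h) z = 0" "ev k (DY k D) x (b+h) z = 0"
       "\<forall>t\<in>set (off h m). ev k D x (b+t) z = 0"
  shows "ev k D x y z = 0"
proof -
  have deg: "degree (YP k D x z) \<le> m + 2"
    using m deg_YP[of k D x z] deg_low[OF deg_YP, of k D x z] coeff_YP[of k D x z] k by auto
  have "YP k D x z = 0"
    by (rule L1[OF h _ deg]) (use m k p in \<open>auto simp: poly_YP pderiv_YP\<close>)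
  then show ?thesis using poly_YP[of k D x z y] by simp
qed

lemma L1Z:
  assumes k: "4 \<le> k" and h: "0 < h" and m: "m = k-2 \<or> (m = k-3 \<and> ZA k D k x y = 0)"
    and p: "ev k D x y c = 0" "ev k (DZ k D) x y c = 0" "ev k D x y (c+h) = 0" "ev k (DZ k D) x y (c+h) = 0"
       "\<forall>t\<in>set (off h m). ev k D x y (c+t) = 0"
  shows "ev k D x y z = 0"
proof -
  have deg: "degree (ZP k D x y) \<le> m + 2"
    using m deg_ZP[of k D x y] deg_low[OF deg_ZP, of k D x y] coeff_ZP[of k D x y] k by auto
  have "ZP k D x y = 0"
    by (rule L1[OF h _ deg]) (use m k p in \<open>auto simp: poly_ZP pderiv_ZP\<close>)
  then show ?thesis using poly_ZP[of k D x y z] by simp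
qed

lemma topX_DY: "CondY k C y0 \<Longrightarrow> XA k (DY k C) k y0 z = 0"
  unfolding XA_YF CondY_def by (intro sum.neutral) auto
lemma topX_DZ: "CondZ k C z0 \<Longrightarrow> XA k (DZ k C) k y z0 = 0"
  unfolding XA_ZF CondZ_def by (intro sum.neutral) auto
lemma topX_DYZ: "CondZ k C z0 \<Longrightarrow> XA k (DY k (DZ k C)) k y z0 = 0"
  unfolding XA_ZF CondZ_def ZF_DY by (intro sum.neutral) auto
lemma topY_DX: "CondX k C x0 \<Longrightarrow> YA k (DX k C) k x0 z = 0"
  unfolding YA_XF CondX_def by (intro sum.neutral) auto
lemma topY_DZ: "CondZ k C z0 \<Longrightarrow> YA k (DZ k C) k x z0 = 0"
  unfolding YA_ZF CondZ_def by (intro sum.neutral) auto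
lemma topY_DXZ: assumes "CondZ k C z0" shows "YA k (DX k (DZ k C)) k x z0 = 0"
proof -
  have "ZF k (DZ k C) (Suc i) k z0 = 0" if "i < k" for i
    using assms[unfolded CondZ_def, rule_format, of "Suc i" k] that by simp
  thus ?thesis unfolding YA_ZF ZF_DX by (intro sum.neutral) auto
qed
lemma topZ_DX: "CondX k C x0 \<Longrightarrow> ZA k (DX k C) k x0 y = 0"
  unfolding ZA_XF CondX_def by (intro sum.neutral) auto
lemma topZ_DY: "CondY k C y0 \<Longrightarrow> ZA k (DY k C) k x y0 = 0"
  unfolding ZA_YF CondY_def by (intro sum.neutral) auto
lemma topZ_DXY: assumes "CondY k C y0" shows "ZA k (DX k (DY k C)) k x y0 = 0"
proof -
  have "YF k (DY k C) (Suc i) k y0 = 0" if "i < k" for i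
    using assms[unfolded CondY_def, rule_format, of "Suc i" k] that by simp
  thus ?thesis unfolding ZA_YF YF_DX by (intro sum.neutral) auto
qed


lemma dofs_zero:
  assumes Z: "\<forall>f\<in>set (dofs k a b c h). f v = 0"
  shows "\<forall>x\<in>{a,a+h}. \<forall>y\<in>{b,b+h}. \<forall>z\<in>{c,c+h}. v x y z = 0 \<and> dX v x y z = 0 \<and> dY v x y z = 0 \<and> dZ v x y z = 0
          \<and> dX (dY v) x y z = 0 \<and> dX (dZ v) x y z = 0 \<and> dY (dZ v) x y z = 0 \<and> dX (dY (dZ v)) x y z = 0"
   and "\<forall>y\<in>{b,b+h}. \<forall>z\<in>{c,c+h}. \<forall>t\<in>set (off h (k-2)). v (a+t) y z = 0"
   and "\<forall>x\<in>{a,a+h}. \<forall>z\<in>{c,c+h}. \<forall>t\<in>set (off h (k-2)). v x (b+t) z = 0"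
   and "\<forall>x\<in>{a,a+h}. \<forall>y\<in>{b,b+h}. \<forall>t\<in>set (off h (k-2)). v x y (c+t) = 0"
   and "\<forall>y\<in>{b,b+h}. \<forall>z\<in>{c,c+h}. \<forall>t\<in>set (off h (k-3)). dY v (a+t) y z = 0 \<and> dZ v (a+t) y z = 0 \<and> dY (dZ v) (a+t) y z = 0"
   and "\<forall>x\<in>{a,a+h}. \<forall>z\<in>{c,c+h}. \<forall>t\<in>set (off h (k-3)). dX v x (b+t) z = 0 \<and> dZ v x (b+t) z = 0 \<and> dX (dZ v) x (b+t) z = 0"
   and "\<forall>x\<in>{a,a+h}. \<forall>y\<in>{b,b+h}. \<forall>t\<in>set (off h (k-3)). dX v x y (c+t) = 0 \<and> dY v x y (c+t) = 0 \<and> dX (dY v) x y (c+t) = 0"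
   and "\<forall>x\<in>{a,a+h}. \<forall>s\<in>set (off h (k-2)). \<forall>t\<in>set (off h (k-2)). v x (b+s) (c+t) = 0"
   and "\<forall>y\<in>{b,b+h}. \<forall>s\<in>set (off h (k-2)). \<forall>t\<in>set (off h (k-2)). v (a+s) y (c+t) = 0"
   and "\<forall>z\<in>{c,c+h}. \<forall>s\<in>set (off h (k-2)). \<forall>t\<in>set (off h (k-2)). v (a+s) (b+t) z = 0"
   and "\<forall>x\<in>{a,a+h}. \<forall>s\<in>set (off h (k-3)). \<forall>t\<in>set (off h (k-3)). dX v x (b+s) (c+t) = 0"
   and "\<forall>y\<in>{b,b+h}. \<forall>s\<in>set (off h (k-3)). \<forall>t\<in>set (off h (k-3)). dY v (a+s) y (c+t) = 0"
   and "\<forall>z\<in>{c,c+h}. \<forall>s\<in>set (off h (k-3)). \<forall>t\<in>set (off h (k-3)). dZ v (a+s) (b+t) z = 0"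
   and "\<forall>r\<in>set (off h (k-2)). \<forall>s\<in>set (off h (k-2)). \<forall>t\<in>set (off h (k-2)). v (a+r) (b+s) (c+t) = 0"
  using Z unfolding dofs_def set_append ball_Un
  by (simp_all add: ball_UN ball_Un)

lemma uniq_coef:
  assumes k: "4 \<le> k" and h: "0 < h"
  and cx: "CondX k C a" "CondX k C (a+h)" and cy: "CondY k C b" "CondY k C (b+h)"
  and cz: "CondZ k C c" "CondZ k C (c+h)"
  and Z: "\<forall>f\<in>set (dofs k a b c h). f (ev k C) = 0"
  shows "ev k C x y z = 0"
proof -
  have Zf: "f (ev k C) = 0" if "f \<in> set (dofs k a b c h)" for f using Z that by blast
  note dev = dX_ev dY_ev dZ_ev DYX DZX DZY
  note DZ = dofs_zero[OF Z, unfolded dX_ev dY_ev dZ_ev]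
  have CX: "CondX k C x0" if "x0 \<in> {a,a+h}" for x0 using cx that by auto
  have CY: "CondY k C y0" if "y0 \<in> {b,b+h}" for y0 using cy that by auto
  have CZ: "CondZ k C z0" if "z0 \<in> {c,c+h}" for z0 using cz that by auto
  have V0: "ev k (C) x0 y0 z0 = 0" if "x0 \<in> {a,a+h}" "y0 \<in> {b,b+h}" "z0 \<in> {c,c+h}" for x0 y0 z0
    using DZ(1) that by blast
  have V1: "ev k (DX k C) x0 y0 z0 = 0" if "x0 \<in> {a,a+h}" "y0 \<in> {b,b+h}" "z0 \<in> {c,c+h}" for x0 y0 z0
    using DZ(1) that by blast
  have V2: "ev k (DY k C) x0 y0 z0 = 0" if "x0 \<in> {a,a+h}" "y0 \<in> {b,b+h}" "z0 \<in> {c,c+h}" for x0 y0 z0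
    using DZ(1) that by blast
  have V3: "ev k (DZ k C) x0 y0 z0 = 0" if "x0 \<in> {a,a+h}" "y0 \<in> {b,b+h}" "z0 \<in> {c,c+h}" for x0 y0 z0
    using DZ(1) that by blast
  have V4: "ev k (DX k (DY k C)) x0 y0 z0 = 0" if "x0 \<in> {a,a+h}" "y0 \<in> {b,b+h}" "z0 \<in> {c,c+h}" for x0 y0 z0
    using DZ(1) that by blast
  have V5: "ev k (DX k (DZ k C)) x0 y0 z0 = 0" if "x0 \<in> {a,a+h}" "y0 \<in> {b,b+h}" "z0 \<in> {c,c+h}" for x0 y0 z0
    using DZ(1) that by blast
  have V6: "ev k (DY k (DZ k C)) x0 y0 z0 = 0" if "x0 \<in> {a,a+h}" "y0 \<in> {b,b+h}" "z0 \<in> {c,c+h}" for x0 y0 z0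
    using DZ(1) that by blast
  have V7: "ev k (DX k (DY k (DZ k C))) x0 y0 z0 = 0" if "x0 \<in> {a,a+h}" "y0 \<in> {b,b+h}" "z0 \<in> {c,c+h}" for x0 y0 z0
    using DZ(1) that by blast
  have E2x: "ev k (C) (a+t) y0 z0 = 0" if "t \<in> set (off h (k-2))" "y0 \<in> {b,b+h}" "z0 \<in> {c,c+h}" for t y0 z0
    using DZ(2) that by blast
  have E2y: "ev k (C) x0 (b+t) z0 = 0" if "t \<in> set (off h (k-2))" "x0 \<in> {a,a+h}" "z0 \<in> {c,c+h}" for t x0 z0
    using DZ(3) that by blast
  have E2z: "ev k (C) x0 y0 (c+t) = 0" if "t \<in> set (off h (k-2))" "x0 \<in> {a,a+h}" "y0 \<in> {b,b+h}" for t x0 y0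
    using DZ(4) that by blast
  have E3x0: "ev k (DY k C) (a+t) y0 z0 = 0" if "t \<in> set (off h (k-3))" "y0 \<in> {b,b+h}" "z0 \<in> {c,c+h}" for t y0 z0
    using DZ(5) that by blast
  have E3x1: "ev k (DZ k C) (a+t) y0 z0 = 0" if "t \<in> set (off h (k-3))" "y0 \<in> {b,b+h}" "z0 \<in> {c,c+h}" for t y0 z0
    using DZ(5) that by blast
  have E3x2: "ev k (DY k (DZ k C)) (a+t) y0 z0 = 0" if "t \<in> set (off h (k-3))" "y0 \<in> {b,b+h}" "z0 \<in> {c,c+h}" for t y0 z0
    using DZ(5) that by blast
  have E3y0: "ev k (DX k C) x0 (b+t) z0 = 0" if "t \<in> set (off h (k-3))" "x0 \<in> {a,a+h}" "z0 \<in> {c,c+h}" for t x0 z0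
    using DZ(6) that by blast
  have E3y1: "ev k (DZ k C) x0 (b+t) z0 = 0" if "t \<in> set (off h (k-3))" "x0 \<in> {a,a+h}" "z0 \<in> {c,c+h}" for t x0 z0
    using DZ(6) that by blast
  have E3y2: "ev k (DX k (DZ k C)) x0 (b+t) z0 = 0" if "t \<in> set (off h (k-3))" "x0 \<in> {a,a+h}" "z0 \<in> {c,c+h}" for t x0 z0
    using DZ(6) that by blast
  have E3z0: "ev k (DX k C) x0 y0 (c+t) = 0" if "t \<in> set (off h (k-3))" "x0 \<in> {a,a+h}" "y0 \<in> {b,b+h}" for t x0 y0
    using DZ(7) that by blast
  have E3z1: "ev k (DY k C) x0 y0 (c+t) = 0" if "t \<in> set (off h (k-3))" "x0 \<in> {a,a+h}" "y0 \<in> {b,b+h}" for t x0 y0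
    using DZ(7) that by blast
  have E3z2: "ev k (DX k (DY k C)) x0 y0 (c+t) = 0" if "t \<in> set (off h (k-3))" "x0 \<in> {a,a+h}" "y0 \<in> {b,b+h}" for t x0 y0
    using DZ(7) that by blast
  have F4x: "ev k (C) x0 (b+s) (c+t) = 0" if "s \<in> set (off h (k-2))" "t \<in> set (off h (k-2))" "x0 \<in> {a,a+h}" for s t x0
    using DZ(8) that by blast
  have F4y: "ev k (C) (a+s) y0 (c+t) = 0" if "s \<in> set (off h (k-2))" "t \<in> set (off h (k-2))" "y0 \<in> {b,b+h}" for s t y0
    using DZ(9) that by blast
  have F4z: "ev k (C) (a+s) (b+t) z0 = 0" if "s \<in> set (off h (k-2))" "t \<in> set (off h (k-2))" "z0 \<in> {c,c+h}" for s t z0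
    using DZ(10) that by blast
  have F5x: "ev k (DX k C) x0 (b+s) (c+t) = 0" if "s \<in> set (off h (k-3))" "t \<in> set (off h (k-3))" "x0 \<in> {a,a+h}" for s t x0
    using DZ(11) that by blast
  have F5y: "ev k (DY k C) (a+s) y0 (c+t) = 0" if "s \<in> set (off h (k-3))" "t \<in> set (off h (k-3))" "y0 \<in> {b,b+h}" for s t y0
    using DZ(12) that by blast
  have F5z: "ev k (DZ k C) (a+s) (b+t) z0 = 0" if "s \<in> set (off h (k-3))" "t \<in> set (off h (k-3))" "z0 \<in> {c,c+h}" for s t z0
    using DZ(13) that by blast
  have I6: "ev k (C) (a+r) (b+s) (c+t) = 0" if "r \<in> set (off h (k-2))" "s \<in> set (off h (k-2))" "t \<in> set (off h (k-2))" for r s t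
    using DZ(14) that by blast
  note Vs = V0 V1 V2 V3 V4 V5 V6 V7
  have E1x: "ev k (C) x y0 z0 = 0" if "y0 \<in> {b,b+h}" "z0 \<in> {c,c+h}" for x y0 z0
    by (rule L1X[OF k h, where m="k-2" and a=a]) (use that Vs E2x in \<open>auto simp: dev\<close>)
  have E1y: "ev k (C) x0 y z0 = 0" if "x0 \<in> {a,a+h}" "z0 \<in> {c,c+h}" for x0 y z0
    by (rule L1Y[OF k h, where m="k-2" and b=b]) (use that Vs E2y in \<open>auto simp: dev\<close>)
  have E1z: "ev k (C) x0 y0 z = 0" if "x0 \<in> {a,a+h}" "y0 \<in> {b,b+h}" for x0 y0 z
    by (rule L1Z[OF k h, where m="k-2" and c=c]) (use that Vs E2z in \<open>auto simp: dev\<close>)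
  have G1x0: "ev k (DY k C) x y0 z0 = 0" if "y0 \<in> {b,b+h}" "z0 \<in> {c,c+h}" for x y0 z0
    by (rule L1X[OF k h, where m="k-3" and a=a]) (use that Vs E3x0 topX_DY[OF CY[OF that(1)]] in \<open>auto simp: dev\<close>)
  have G1x1: "ev k (DZ k C) x y0 z0 = 0" if "y0 \<in> {b,b+h}" "z0 \<in> {c,c+h}" for x y0 z0
    by (rule L1X[OF k h, where m="k-3" and a=a]) (use that Vs E3x1 topX_DZ[OF CZ[OF that(2)]] in \<open>auto simp: dev\<close>)
  have G1x2: "ev k (DY k (DZ k C)) x y0 z0 = 0" if "y0 \<in> {b,b+h}" "z0 \<in> {c,c+h}" for x y0 z0
    by (rule L1X[OF k h, where m="k-3" and a=a]) (use that Vs E3x2 topX_DYZ[OF CZ[OF that(2)]] in \<open>auto simp: dev\<close>)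
  have G1y0: "ev k (DX k C) x0 y z0 = 0" if "x0 \<in> {a,a+h}" "z0 \<in> {c,c+h}" for x0 y z0
    by (rule L1Y[OF k h, where m="k-3" and b=b]) (use that Vs E3y0 topY_DX[OF CX[OF that(1)]] in \<open>auto simp: dev\<close>)
  have G1y1: "ev k (DZ k C) x0 y z0 = 0" if "x0 \<in> {a,a+h}" "z0 \<in> {c,c+h}" for x0 y z0
    by (rule L1Y[OF k h, where m="k-3" and b=b]) (use that Vs E3y1 topY_DZ[OF CZ[OF that(2)]] in \<open>auto simp: dev\<close>)
  have G1y2: "ev k (DX k (DZ k C)) x0 y z0 = 0" if "x0 \<in> {a,a+h}" "z0 \<in> {c,c+h}" for x0 y z0
    by (rule L1Y[OF k h, where m="k-3" and b=b]) (use that Vs E3y2 topY_DXZ[OF CZ[OF that(2)]] in \<open>auto simp: dev\<close>)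
  have G1z0: "ev k (DX k C) x0 y0 z = 0" if "x0 \<in> {a,a+h}" "y0 \<in> {b,b+h}" for x0 y0 z
    by (rule L1Z[OF k h, where m="k-3" and c=c]) (use that Vs E3z0 topZ_DX[OF CX[OF that(1)]] in \<open>auto simp: dev\<close>)
  have G1z1: "ev k (DY k C) x0 y0 z = 0" if "x0 \<in> {a,a+h}" "y0 \<in> {b,b+h}" for x0 y0 z
    by (rule L1Z[OF k h, where m="k-3" and c=c]) (use that Vs E3z1 topZ_DY[OF CY[OF that(2)]] in \<open>auto simp: dev\<close>)
  have G1z2: "ev k (DX k (DY k C)) x0 y0 z = 0" if "x0 \<in> {a,a+h}" "y0 \<in> {b,b+h}" for x0 y0 z
    by (rule L1Z[OF k h, where m="k-3" and c=c]) (use that Vs E3z2 topZ_DXY[OF CY[OF that(2)]] in \<open>auto simp: dev\<close>)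
  have H0x: "ev k (C) x0 (b+t) z = 0" if "x0 \<in> {a,a+h}" "t \<in> set (off h (k-2))" for x0 t z
    by (rule L1Z[OF k h, where m="k-2" and c=c]) (use that E1y G1y1 F4x in \<open>auto simp: dev\<close>)
  have FX0: "ev k (C) x0 y z = 0" if "x0 \<in> {a,a+h}" for x0 y z
    by (rule L1Y[OF k h, where m="k-2" and b=b]) (use that E1z G1z1 H0x in \<open>auto simp: dev\<close>)
  have H1x: "ev k (DX k C) x0 (b+s) z = 0" if "x0 \<in> {a,a+h}" "s \<in> set (off h (k-3))" for x0 s z
    by (rule L1Z[OF k h, where m="k-3" and c=c]) (use that G1y0 G1y2 F5x topZ_DX[OF CX[OF that(1)]] in \<open>auto simp: dev\<close>)
  have FX1: "ev k (DX k C) x0 y z = 0" if "x0 \<in> {a,a+h}" for x0 y z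
    by (rule L1Y[OF k h, where m="k-3" and b=b]) (use that G1z0 G1z2 H1x topY_DX[OF CX[OF that(1)]] in \<open>auto simp: dev\<close>)
  have H0y: "ev k (C) (a+t) y0 z = 0" if "y0 \<in> {b,b+h}" "t \<in> set (off h (k-2))" for y0 t z
    by (rule L1Z[OF k h, where m="k-2" and c=c]) (use that E1x G1x1 F4y in \<open>auto simp: dev\<close>)
  have FY0: "ev k (C) x y0 z = 0" if "y0 \<in> {b,b+h}" for x y0 z
    by (rule L1X[OF k h, where m="k-2" and a=a]) (use that E1z G1z0 H0y in \<open>auto simp: dev\<close>)
  have H1y: "ev k (DY k C) (a+s) y0 z = 0" if "y0 \<in> {b,b+h}" "s \<in> set (off h (k-3))" for y0 s z
    by (rule L1Z[OF k h, where m="k-3" and c=c]) (use that G1x0 G1x2 F5y topZ_DY[OF CY[OF that(1)]] in \<open>auto simp: dev\<close>)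
  have FY1: "ev k (DY k C) x y0 z = 0" if "y0 \<in> {b,b+h}" for x y0 z
    by (rule L1X[OF k h, where m="k-3" and a=a]) (use that G1z1 G1z2 H1y topX_DY[OF CY[OF that(1)]] in \<open>auto simp: dev\<close>)
  have H0z: "ev k (C) (a+s) y z0 = 0" if "z0 \<in> {c,c+h}" "s \<in> set (off h (k-2))" for z0 s y
    by (rule L1Y[OF k h, where m="k-2" and b=b]) (use that E1x G1x0 F4z in \<open>auto simp: dev\<close>)
  have FZ0: "ev k (C) x y z0 = 0" if "z0 \<in> {c,c+h}" for x y z0
    by (rule L1X[OF k h, where m="k-2" and a=a]) (use that E1y G1y0 H0z in \<open>auto simp: dev\<close>)
  have H1z: "ev k (DZ k C) (a+s) y z0 = 0" if "z0 \<in> {c,c+h}" "s \<in> set (off h (k-3))" for z0 s y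
    by (rule L1Y[OF k h, where m="k-3" and b=b]) (use that G1x1 G1x2 F5z topY_DZ[OF CZ[OF that(1)]] in \<open>auto simp: dev\<close>)
  have FZ1: "ev k (DZ k C) x y z0 = 0" if "z0 \<in> {c,c+h}" for x y z0
    by (rule L1X[OF k h, where m="k-3" and a=a]) (use that G1y1 G1y2 H1z topX_DZ[OF CZ[OF that(1)]] in \<open>auto simp: dev\<close>)
  have J1: "ev k (C) x (b+s) (c+t) = 0" if "s \<in> set (off h (k-2))" "t \<in> set (off h (k-2))" for x s t
    by (rule L1X[OF k h, where m="k-2" and a=a]) (use that FX0 FX1 I6 in \<open>auto simp: dev\<close>)
  have J2: "ev k (C) x y (c+t) = 0" if "t \<in> set (off h (k-2))" for x y t
    by (rule L1Y[OF k h, where m="k-2" and b=b]) (use that FY0 FY1 J1 in \<open>auto simp: dev\<close>)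
  have J3: "ev k (C) x y z = 0" for x y z
    by (rule L1Z[OF k h, where m="k-2" and c=c]) (use FZ0 FZ1 J2 in \<open>auto simp: dev\<close>)
  show ?thesis by (rule J3)
qed


definition psi :: "nat \<Rightarrow> real \<Rightarrow> nat \<Rightarrow> real poly" where
  "psi k h i = (if i = k - 1 then monom 1 (k-1)
      else monom 1 i - Polynomial.smult (of_nat i * h^i / (of_nat (k-1) * h^(k-1))) (monom 1 (k-1)))"

definition Pb :: "nat \<Rightarrow> real \<Rightarrow> real \<Rightarrow> nat \<Rightarrow> real poly" where
  "Pb k a h i = pcompose (psi k h i) [:-a,1:]"

lemma deg_psi: assumes "i \<le> k" shows "degree (psi k h i) \<le> k"
  using assms unfolding psi_def
  by (auto intro!: order.trans[OF degree_diff_le] order.trans[OF degree_smult_le] order.trans[OF degree_monom_le])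

lemma deg_psi': assumes "i < k" shows "degree (psi k h i) \<le> k - 1"
proof -
  have a: "degree (monom (1::real) i) \<le> k - 1" using assms by (simp add: degree_monom_eq)
  have b: "degree (Polynomial.smult r (monom (1::real) (k-1))) \<le> k - 1" for r
    by (rule order.trans[OF degree_smult_le]) (simp add: degree_monom_eq)
  show ?thesis unfolding psi_def using a b by (auto intro!: degree_diff_le simp: degree_monom_eq)
qed

lemma deg_Pb: "degree (Pb k a h i) = degree (psi k h i)"
  unfolding Pb_def by (simp add: degree_pcompose)

lemma coeff_Pb_k: assumes "i < k" shows "coeff (Pb k a h i) k = 0"
proof -
  have "degree (Pb k a h i) < k" using deg_psi'[OF assms, of h] assms unfolding deg_Pb by simp
  thus ?thesis by (simp add: coeff_eq_0)
qed

lemma poly_pderiv_Pb: "poly (pderiv (Pb k a h i)) x = poly (pderiv (psi k h i)) (x - a)"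
  unfolding Pb_def pderiv_pcompose by (simp add: poly_pcompose pderiv_pCons)

lemma pd0: assumes "4 \<le> k" "i \<noteq> 1" shows "poly (pderiv (psi k h i)) 0 = 0"
proof -
  have k2: "k - 1 - 1 \<noteq> 0" using assms by simp
  have z: "(0::real) ^ (k - 1 - 1) = 0" using k2 by simp
  show ?thesis using assms k2 z unfolding psi_def
    by (cases i) (auto simp: pderiv_monom pderiv_diff pderiv_smult poly_monom power_0_left)
qed

lemma pdh: assumes "4 \<le> k" "i \<noteq> k - 1" "0 < h" shows "poly (pderiv (psi k h i)) h = 0"
proof (cases i)
  case 0
  then show ?thesis using assms unfolding psi_def by (auto simp: pderiv_monom pderiv_diff pderiv_smult poly_monom)
next
  case (Suc j)
  obtain m where k: "k = Suc (Suc m)" using assms(1) by (cases k; cases "k - 1") auto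
  have "poly (pderiv (psi k h i)) h
      = of_nat i * h^j - (of_nat i * h^i / (of_nat (Suc m) * h^(Suc m))) * (of_nat (Suc m) * h^m)"
    using assms Suc unfolding psi_def k by (simp add: pderiv_monom pderiv_diff pderiv_smult poly_monom)
  also have "\<dots> = 0"
  proof -
    have Y: "of_nat (Suc m) * h^(Suc m) \<noteq> 0" using assms(3) by simp
    have "(of_nat i * h^i / (of_nat (Suc m) * h^(Suc m))) * (of_nat (Suc m) * h^m)
        = (of_nat i * h^j * (of_nat (Suc m) * h^(Suc m))) / (of_nat (Suc m) * h^(Suc m))"
      unfolding Suc by (simp add: mult_ac)
    also have "\<dots> = of_nat i * h^j" using Y by simp
    finally show ?thesis by simp
  qed
  finally show ?thesis .
qed

lemma coeff_psi: "coeff (psi k h i) m = (if i = k - 1 then (if m = k - 1 then 1 else 0)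
   else (if m = i then 1 else 0) - (of_nat i * h^i / (of_nat (k-1) * h^(k-1))) * (if m = k - 1 then 1 else 0))"
  unfolding psi_def by (simp add: coeff_monom)

lemma indep1:
  assumes k: "4 \<le> k" and s: "(\<Sum>i\<le>k. Polynomial.smult (w i) (Pb k a h i)) = 0"
  shows "\<forall>i\<le>k. w i = 0"
proof -
  have "pcompose (\<Sum>i\<le>k. Polynomial.smult (w i) (psi k h i)) [:-a,1:] = 0"
    using s unfolding Pb_def by (simp add: pcompose_sum pcompose_smult)
  hence z: "(\<Sum>i\<le>k. Polynomial.smult (w i) (psi k h i)) = 0"
    by (rule pcompose_eq_0) simp
  have c: "(\<Sum>i\<le>k. w i * coeff (psi k h i) m) = 0" for m
    using arg_cong[OF z, of "\<lambda>p. coeff p m"] by (simp add: coeff_sum)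
  have w1: "w m = 0" if "m \<le> k" "m \<noteq> k - 1" for m
  proof -
    have "(\<Sum>i\<le>k. w i * coeff (psi k h i) m) = (\<Sum>i\<le>k. if i = m then w i else 0)"
      by (rule sum.cong) (use that in \<open>auto simp: coeff_psi\<close>)
    also have "\<dots> = w m" using that by simp
    finally show ?thesis using c[of m] by simp
  qed
  have w2: "w (k-1) = 0"
  proof -
    have "(\<Sum>i\<le>k. w i * coeff (psi k h i) (k-1)) = (\<Sum>i\<le>k. if i = k - 1 then w i else 0)"
      by (rule sum.cong) (use w1 in \<open>auto simp: coeff_psi\<close>)
    also have "\<dots> = w (k-1)" by simp
    finally show ?thesis using c[of "k-1"] by simp
  qed
  show ?thesis using w1 w2 by metis
qed


lemma poly_sum_k: fixes p :: "real poly" assumes "degree p \<le> k" shows "poly p x = (\<Sum>i\<le>k. coeff p i * x^i)"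
proof -
  have "poly p x = (\<Sum>i\<le>degree p. coeff p i * x^i)" by (rule poly_altdef)
  also have "\<dots> = (\<Sum>i\<le>k. coeff p i * x^i)"
    by (rule sum.mono_neutral_left) (use assms in \<open>auto simp: coeff_eq_0\<close>)
  finally show ?thesis .
qed

lemma pd_sum: fixes p :: "real poly" assumes "degree p \<le> k"
  shows "poly (pderiv p) x = (\<Sum>i\<le>k. (if i < k then of_nat (Suc i) * coeff p (Suc i) else 0) * x^i)"
proof -
  have "degree (pderiv p) \<le> k" using assms unfolding degree_pderiv by simp
  hence "poly (pderiv p) x = (\<Sum>i\<le>k. coeff (pderiv p) i * x^i)" by (rule poly_sum_k)
  also have "\<dots> = (\<Sum>i\<le>k. (if i < k then of_nat (Suc i) * coeff p (Suc i) else 0) * x^i)"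
    by (rule sum.cong) (use assms in \<open>auto simp: coeff_pderiv coeff_eq_0\<close>)
  finally show ?thesis .
qed

lemma deg_Pb_k: "i \<le> k \<Longrightarrow> degree (Pb k a h i) \<le> k"
  by (simp add: deg_Pb deg_psi)

definition CB :: "nat \<Rightarrow> real \<Rightarrow> real \<Rightarrow> real \<Rightarrow> real \<Rightarrow> nat \<times> nat \<times> nat \<Rightarrow> nat \<Rightarrow> nat \<Rightarrow> nat \<Rightarrow> real" where
  "CB k a b c h \<tau> = (\<lambda>i j l. coeff (Pb k a h (fst \<tau>)) i * coeff (Pb k b h (fst (snd \<tau>))) j
                            * coeff (Pb k c h (snd (snd \<tau>))) l)"

lemma ev_CB:
  assumes "i0 \<le> k" "j0 \<le> k" "l0 \<le> k"
  shows "ev k (CB k a b c h (i0,j0,l0)) x y z = poly (Pb k a h i0) x * poly (Pb k b h j0) y * poly (Pb k c h l0) z"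
  unfolding poly_sum_k[OF deg_Pb_k[OF assms(1)]] poly_sum_k[OF deg_Pb_k[OF assms(2)]]
    poly_sum_k[OF deg_Pb_k[OF assms(3)]] ev_def CB_def
  by (simp add: sum_distrib_left sum_distrib_right mult_ac) (rule sum.swap)

lemma XF_DX_CB:
  assumes "i0 \<le> k"
  shows "XF k (DX k (CB k a b c h (i0,j0,l0))) j l x
       = poly (pderiv (Pb k a h i0)) x * coeff (Pb k b h j0) j * coeff (Pb k c h l0) l"
  unfolding pd_sum[OF deg_Pb_k[OF assms]] XF_def DX_def CB_def sum_distrib_right
  by (rule sum.cong) (auto simp: mult_ac)

lemma YF_DY_CB:
  assumes "j0 \<le> k"
  shows "YF k (DY k (CB k a b c h (i0,j0,l0))) i l y
       = coeff (Pb k a h i0) i * poly (pderiv (Pb k b h j0)) y * coeff (Pb k c h l0) l"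
  unfolding pd_sum[OF deg_Pb_k[OF assms]] YF_def DY_def CB_def sum_distrib_right sum_distrib_left
  by (rule sum.cong) (auto simp: mult_ac)

lemma ZF_DZ_CB:
  assumes "l0 \<le> k"
  shows "ZF k (DZ k (CB k a b c h (i0,j0,l0))) i j z
       = coeff (Pb k a h i0) i * coeff (Pb k b h j0) j * poly (pderiv (Pb k c h l0)) z"
  unfolding pd_sum[OF deg_Pb_k[OF assms]] ZF_def DZ_def CB_def sum_distrib_right sum_distrib_left
  by (rule sum.cong) (auto simp: mult_ac)

definition Aset :: "nat \<Rightarrow> (nat \<times> nat \<times> nat) set" where
  "Aset k = ({..<k} \<times> {..<k} \<times> {..<k}) \<union> (({..k} - {1, k-1}) \<times> ({..k} - {1, k-1}) \<times> ({..k} - {1, k-1}))"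

lemma Aset_sub: "Aset k \<subseteq> {..k} \<times> {..k} \<times> {..k}"
  unfolding Aset_def by auto

lemma pdPb_a: "4 \<le> k \<Longrightarrow> i \<noteq> 1 \<Longrightarrow> poly (pderiv (Pb k a h i)) a = 0"
  by (simp add: poly_pderiv_Pb pd0)
lemma pdPb_ah: "4 \<le> k \<Longrightarrow> 0 < h \<Longrightarrow> i \<noteq> k - 1 \<Longrightarrow> poly (pderiv (Pb k a h i)) (a+h) = 0"
  by (simp add: poly_pderiv_Pb pdh)

lemma cond_CB:
  assumes k: "4 \<le> k" and h: "0 < h" and t: "(i0,j0,l0) \<in> Aset k"
  shows "CondX k (CB k a b c h (i0,j0,l0)) a" "CondX k (CB k a b c h (i0,j0,l0)) (a+h)"
        "CondY k (CB k a b c h (i0,j0,l0)) b" "CondY k (CB k a b c h (i0,j0,l0)) (b+h)"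
        "CondZ k (CB k a b c h (i0,j0,l0)) c" "CondZ k (CB k a b c h (i0,j0,l0)) (c+h)"
proof -
  have le: "i0 \<le> k" "j0 \<le> k" "l0 \<le> k" using t Aset_sub by auto
  have cases: "(i0 < k \<and> j0 < k \<and> l0 < k) \<or> (i0 \<notin> {1, k-1} \<and> j0 \<notin> {1, k-1} \<and> l0 \<notin> {1, k-1})"
    using t unfolding Aset_def by auto
  note ck = coeff_Pb_k
  show "CondX k (CB k a b c h (i0,j0,l0)) a" "CondX k (CB k a b c h (i0,j0,l0)) (a+h)"
    unfolding CondX_def XF_DX_CB[OF le(1)] using cases k h
    by (auto simp: ck pdPb_a pdPb_ah)
  show "CondY k (CB k a b c h (i0,j0,l0)) b" "CondY k (CB k a b c h (i0,j0,l0)) (b+h)"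
    unfolding CondY_def YF_DY_CB[OF le(2)] using cases k h
    by (auto simp: ck pdPb_a pdPb_ah)
  show "CondZ k (CB k a b c h (i0,j0,l0)) c" "CondZ k (CB k a b c h (i0,j0,l0)) (c+h)"
    unfolding CondZ_def ZF_DZ_CB[OF le(3)] using cases k h
    by (auto simp: ck pdPb_a pdPb_ah)
qed

lemma DX_lin: "DX k (\<lambda>i j l. \<Sum>n\<in>S. w n * G n i j l) = (\<lambda>i j l. \<Sum>n\<in>S. w n * DX k (G n) i j l)"
  by (auto simp: DX_def fun_eq_iff sum_distrib_left mult_ac)
lemma DY_lin: "DY k (\<lambda>i j l. \<Sum>n\<in>S. w n * G n i j l) = (\<lambda>i j l. \<Sum>n\<in>S. w n * DY k (G n) i j l)"
  by (auto simp: DY_def fun_eq_iff sum_distrib_left mult_ac)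
lemma DZ_lin: "DZ k (\<lambda>i j l. \<Sum>n\<in>S. w n * G n i j l) = (\<lambda>i j l. \<Sum>n\<in>S. w n * DZ k (G n) i j l)"
  by (auto simp: DZ_def fun_eq_iff sum_distrib_left mult_ac)

lemma XF_lin: "XF k (\<lambda>i j l. \<Sum>n\<in>S. w n * G n i j l) j l x = (\<Sum>n\<in>S. w n * XF k (G n) j l x)"
  unfolding XF_def sum_distrib_right sum_distrib_left by (subst sum.swap) (simp add: mult_ac)
lemma YF_lin: "YF k (\<lambda>i j l. \<Sum>n\<in>S. w n * G n i j l) i l y = (\<Sum>n\<in>S. w n * YF k (G n) i l y)"
  unfolding YF_def sum_distrib_right sum_distrib_left by (subst sum.swap) (simp add: mult_ac)
lemma ZF_lin: "ZF k (\<lambda>i j l. \<Sum>n\<in>S. w n * G n i j l) i j z = (\<Sum>n\<in>S. w n * ZF k (G n) i j z)"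
  unfolding ZF_def sum_distrib_right sum_distrib_left by (subst sum.swap) (simp add: mult_ac)

lemma ev_add: "ev k (\<lambda>i j l. A i j l + B i j l) x y z = ev k A x y z + ev k B x y z"
  by (simp add: ev_def sum.distrib algebra_simps)
lemma ev_scale: "ev k (\<lambda>i j l. r * A i j l) x y z = r * ev k A x y z"
  by (simp add: ev_def sum_distrib_left mult_ac)
lemma ev_zero: "ev k (\<lambda>i j l. 0) x y z = 0"
  by (simp add: ev_def)

lemma ev_lin:
  assumes "finite S"
  shows "ev k (\<lambda>i j l. \<Sum>n\<in>S. w n * G n i j l) x y z = (\<Sum>n\<in>S. w n * ev k (G n) x y z)"
  using assms
proof (induction S rule: finite_induct)
  case empty
  then show ?case by (simp add: ev_zero)
next
  case (insert m S)
  have "ev k (\<lambda>i j l. \<Sum>n\<in>insert m S. w n * G n i j l) x y z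
      = ev k (\<lambda>i j l. w m * G m i j l + (\<Sum>n\<in>S. w n * G n i j l)) x y z"
    using insert by simp
  also have "\<dots> = w m * ev k (G m) x y z + ev k (\<lambda>i j l. \<Sum>n\<in>S. w n * G n i j l) x y z"
    by (simp add: ev_add ev_scale)
  finally show ?case using insert by simp
qed

lemma condX_lin: "(\<forall>n\<in>S. CondX k (G n) x0) \<Longrightarrow> CondX k (\<lambda>i j l. \<Sum>n\<in>S. w n * G n i j l) x0"
  unfolding CondX_def DX_lin XF_lin by (auto intro!: sum.neutral)
lemma condY_lin: "(\<forall>n\<in>S. CondY k (G n) x0) \<Longrightarrow> CondY k (\<lambda>i j l. \<Sum>n\<in>S. w n * G n i j l) x0"
  unfolding CondY_def DY_lin YF_lin by (auto intro!: sum.neutral)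
lemma condZ_lin: "(\<forall>n\<in>S. CondZ k (G n) x0) \<Longrightarrow> CondZ k (\<lambda>i j l. \<Sum>n\<in>S. w n * G n i j l) x0"
  unfolding CondZ_def DZ_lin ZF_lin by (auto intro!: sum.neutral)

lemma indep_fun:
  assumes k: "4 \<le> k" and z: "\<forall>x. (\<Sum>i\<le>k. w i * poly (Pb k a h i) x) = 0"
  shows "\<forall>i\<le>k. w i = 0"
proof -
  have "poly (\<Sum>i\<le>k. Polynomial.smult (w i) (Pb k a h i)) x = 0" for x
    using z by (simp add: poly_sum)
  hence "(\<Sum>i\<le>k. Polynomial.smult (w i) (Pb k a h i)) = 0" using poly_all_0_iff_0 by blast
  thus ?thesis by (rule indep1[OF k])
qed

lemma indep3:
  assumes k: "4 \<le> k"
    and z: "\<forall>x y z. (\<Sum>i0\<le>k. \<Sum>j0\<le>k. \<Sum>l0\<le>k. d i0 j0 l0 * (poly (Pb k a h i0) x * poly (Pb k b h j0) y * poly (Pb k c h l0) z)) = 0"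
  shows "\<forall>i0\<le>k. \<forall>j0\<le>k. \<forall>l0\<le>k. d i0 j0 l0 = 0"
proof -
  have s1: "\<forall>i0\<le>k. (\<Sum>j0\<le>k. \<Sum>l0\<le>k. d i0 j0 l0 * (poly (Pb k b h j0) y * poly (Pb k c h l0) z)) = 0" for y z
  proof (rule indep_fun[OF k])
    show "\<forall>x. (\<Sum>i\<le>k. (\<Sum>j0\<le>k. \<Sum>l0\<le>k. d i j0 l0 * (poly (Pb k b h j0) y * poly (Pb k c h l0) z)) * poly (Pb k a h i) x) = 0"
      using z by (simp add: sum_distrib_left sum_distrib_right mult_ac)
  qed
  have s2: "\<forall>j0\<le>k. (\<Sum>l0\<le>k. d i0 j0 l0 * poly (Pb k c h l0) z) = 0" if "i0 \<le> k" for i0 z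
  proof (rule indep_fun[OF k])
    show "\<forall>y. (\<Sum>j\<le>k. (\<Sum>l0\<le>k. d i0 j l0 * poly (Pb k c h l0) z) * poly (Pb k b h j) y) = 0"
      using s1 that by (simp add: sum_distrib_left sum_distrib_right mult_ac)
  qed
  have s3: "\<forall>l0\<le>k. d i0 j0 l0 = 0" if "i0 \<le> k" "j0 \<le> k" for i0 j0
    by (rule indep_fun[OF k]) (use s2 that in auto)
  show ?thesis using s3 by auto
qed


lemma length_off: "length (off h m) = m - 1" by (simp add: off_def)
lemma lcm': "length (concat (map f xs)) = sum_list (map (\<lambda>x. length (f x)) xs)"
  by (induction xs) auto
lemma len_dofs: assumes "k = m + 4"
  shows "length (dofs k a b c h) = 64 + 12*(m+1) + 36*m + 6*(m+1)^2 + 6*m^2 + (m+1)^3"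
proof -
  have "length (dofs k a b c h) = 64 + 12*(k-3) + 36*(k-4) + 6*(k-3)^2 + 6*(k-4)^2 + (k-3)^3"
    by (simp add: dofs_def length_off lcm' sum_list_triv power2_eq_square power3_eq_cube del: length_concat)
  then show ?thesis using assms by (simp add: power2_eq_square power3_eq_cube algebra_simps)
qed

lemma card_Aset: assumes "k = m + 4"
  shows "card (Aset k) + (m+2)^3 = (m+4)^3 + (m+3)^3"
proof -
  let ?E = "{..k} - {1, k-1}"
  let ?F = "{..<k} - {1, k-1}"
  have cE: "card ?E = m + 3"
  proof -
    have "card ?E = card {..k} - card {1, k-1}" by (rule card_Diff_subset) (use assms in auto)
    thus ?thesis using assms by simp
  qed
  have cF: "card ?F = m + 2"
  proof -
    have "card ?F = card {..<k} - card {1, k-1}" by (rule card_Diff_subset) (use assms in auto)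
    thus ?thesis using assms by simp
  qed
  have I: "({..<k} \<times> {..<k} \<times> {..<k}) \<inter> (?E \<times> ?E \<times> ?E) = ?F \<times> ?F \<times> ?F" by auto
  have "card ({..<k} \<times> {..<k} \<times> {..<k}) + card (?E \<times> ?E \<times> ?E)
      = card (Aset k) + card (({..<k} \<times> {..<k} \<times> {..<k}) \<inter> (?E \<times> ?E \<times> ?E))"
    unfolding Aset_def by (rule card_Un_Int) auto
  thus ?thesis unfolding I using cE cF assms by (simp add: card_cartesian_product power3_eq_cube algebra_simps)
qed

lemma dofs_all:
  assumes "\<And>x y z. P (\<lambda>v. v x y z)" "\<And>x y z. P (\<lambda>v. dX v x y z)" "\<And>x y z. P (\<lambda>v. dY v x y z)"
    "\<And>x y z. P (\<lambda>v. dZ v x y z)" "\<And>x y z. P (\<lambda>v. dX (dY v) x y z)" "\<And>x y z. P (\<lambda>v. dX (dZ v) x y z)"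
    "\<And>x y z. P (\<lambda>v. dY (dZ v) x y z)" "\<And>x y z. P (\<lambda>v. dX (dY (dZ v)) x y z)"
  shows "\<forall>f\<in>set (dofs k a b c h). P f"
  unfolding dofs_def set_append ball_Un by (simp add: ball_UN ball_Un assms)

definition Lin :: "nat \<Rightarrow> (fn3 \<Rightarrow> real) \<Rightarrow> bool" where
  "Lin k f = (\<forall>(S::nat set) w G. finite S \<longrightarrow>
      f (ev k (\<lambda>i j l. \<Sum>n\<in>S. w n * G n i j l)) = (\<Sum>n\<in>S. w n * f (ev k (G n))))"

lemma dofs_Lin: "\<forall>f\<in>set (dofs k a b c h). Lin k f"
  by (rule dofs_all) (simp_all add: Lin_def dX_ev dY_ev dZ_ev DX_lin DY_lin DZ_lin ev_lin)


lemma cond_CB':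
  assumes "4 \<le> k" "0 < h" "\<tau> \<in> Aset k"
  shows "CondX k (CB k a b c h \<tau>) a \<and> CondX k (CB k a b c h \<tau>) (a+h) \<and> CondY k (CB k a b c h \<tau>) b
    \<and> CondY k (CB k a b c h \<tau>) (b+h) \<and> CondZ k (CB k a b c h \<tau>) c \<and> CondZ k (CB k a b c h \<tau>) (c+h)"
proof -
  obtain i0 j0 l0 where t: "\<tau> = (i0,j0,l0)" by (cases \<tau>) auto
  show ?thesis using cond_CB[OF assms(1,2) assms(3)[unfolded t]] unfolding t by auto
qed

lemma ev_CB':
  assumes "\<tau> \<in> Aset k"
  shows "ev k (CB k a b c h \<tau>) x y z = poly (Pb k a h (fst \<tau>)) x * poly (Pb k b h (fst (snd \<tau>))) y
           * poly (Pb k c h (snd (snd \<tau>))) z"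
proof -
  obtain i0 j0 l0 where t: "\<tau> = (i0,j0,l0)" by (cases \<tau>) auto
  have "i0 \<le> k" "j0 \<le> k" "l0 \<le> k" using assms Aset_sub unfolding t by auto
  thus ?thesis unfolding t by (simp add: ev_CB)
qed

theorem lemma3p1:
  fixes k :: nat and a b c h :: real
  assumes "k \<ge> 4" and "h > 0"
  shows "\<forall>g :: nat \<Rightarrow> real. \<exists>!v. v \<in> VT k a b c h \<and>
           (\<forall>i < length (dofs k a b c h). (dofs k a b c h ! i) v = g i)"
proof (intro allI)
  fix g :: "nat \<Rightarrow> real"
  have k4: "4 \<le> k" and h: "0 < h" using assms by auto
  define N where "N = length (dofs k a b c h)"
  obtain m where km: "k = m + 4" using k4 by (metis add.commute le_iff_add)
  have "N + (m+2)^3 = (m+4)^3 + (m+3)^3"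
    unfolding N_def len_dofs[OF km] by (simp add: power2_eq_square power3_eq_cube algebra_simps)
  hence cardA: "card (Aset k) = N" using card_Aset[OF km] by simp
  have finA: "finite (Aset k)" unfolding Aset_def by auto
  obtain e where e1: "e ` {..<N} \<subseteq> Aset k" and e2: "inj_on e {..<N}"
    using card_le_inj[of "{..<N}" "Aset k"] finA cardA by auto
  have eA: "e n \<in> Aset k" if "n < N" for n using e1 that by auto
  define B where "B n = CB k a b c h (e n)" for n
  define Cu where "Cu w = (\<lambda>i j l. \<Sum>n<N. w n * B n i j l)" for w :: "nat \<Rightarrow> real"
  have cB: "\<forall>n\<in>{..<N}. CondX k (B n) a \<and> CondX k (B n) (a+h) \<and> CondY k (B n) b \<and> CondY k (B n) (b+h)
       \<and> CondZ k (B n) c \<and> CondZ k (B n) (c+h)"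
    unfolding B_def using cond_CB'[OF k4 h eA] by auto
  have cu: "CondX k (Cu w) a" "CondX k (Cu w) (a+h)" "CondY k (Cu w) b" "CondY k (Cu w) (b+h)"
      "CondZ k (Cu w) c" "CondZ k (Cu w) (c+h)" for w
    unfolding Cu_def using cB by (auto intro!: condX_lin condY_lin condZ_lin)
  have VTu: "ev k (Cu w) \<in> VT k a b c h" for w
    by (rule VT_I[OF _ cu]) (use k4 in simp)
  have dof_Cu: "f (ev k (Cu w)) = (\<Sum>n<N. w n * f (ev k (B n)))" if "f \<in> set (dofs k a b c h)" for f w
    using dofs_Lin that unfolding Lin_def Cu_def by blast
  have ev_Cu: "ev k (Cu w) x y z = (\<Sum>n<N. w n * (poly (Pb k a h (fst (e n))) x
       * poly (Pb k b h (fst (snd (e n)))) y * poly (Pb k c h (snd (snd (e n)))) z))" for w x y z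
    unfolding Cu_def by (simp add: ev_lin B_def ev_CB'[OF eA])
  have inj: "\<forall>n<N. w n = 0" if z: "\<forall>i<N. (dofs k a b c h ! i) (ev k (Cu w)) = 0" for w
  proof -
    have Z: "\<forall>f\<in>set (dofs k a b c h). f (ev k (Cu w)) = 0" using z by (auto simp: in_set_conv_nth N_def)
    have ev0: "ev k (Cu w) x y z = 0" for x y z by (rule uniq_coef[OF k4 h cu Z])
    define d where "d i0 j0 l0 = (if (i0,j0,l0) \<in> e ` {..<N} then w (the_inv_into {..<N} e (i0,j0,l0)) else 0)"
      for i0 j0 l0
    have "\<forall>x y z. (\<Sum>i0\<le>k. \<Sum>j0\<le>k. \<Sum>l0\<le>k. d i0 j0 l0 * (poly (Pb k a h i0) x * poly (Pb k b h j0) y * poly (Pb k c h l0) z)) = 0"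
    proof (intro allI)
      fix x y z
      define F where "F \<tau> = poly (Pb k a h (fst \<tau>)) x * poly (Pb k b h (fst (snd \<tau>))) y * poly (Pb k c h (snd (snd \<tau>))) z" for \<tau>
      define dd where "dd \<tau> = d (fst \<tau>) (fst (snd \<tau>)) (snd (snd \<tau>))" for \<tau>
      have "(\<Sum>i0\<le>k. \<Sum>j0\<le>k. \<Sum>l0\<le>k. d i0 j0 l0 * (poly (Pb k a h i0) x * poly (Pb k b h j0) y * poly (Pb k c h l0) z))
          = (\<Sum>\<tau>\<in>{..k} \<times> {..k} \<times> {..k}. dd \<tau> * F \<tau>)"
        by (simp add: sum.cartesian_product dd_def F_def split_beta)
      also have "\<dots> = (\<Sum>\<tau>\<in>e ` {..<N}. dd \<tau> * F \<tau>)"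
        by (rule sum.mono_neutral_right) (use e1 Aset_sub in \<open>auto simp: dd_def d_def\<close>)
      also have "\<dots> = (\<Sum>n<N. dd (e n) * F (e n))"
        by (rule sum.reindex[OF e2, unfolded comp_def])
      also have "\<dots> = (\<Sum>n<N. w n * F (e n))"
        by (rule sum.cong) (auto simp: dd_def d_def the_inv_into_f_f[OF e2])
      also have "\<dots> = ev k (Cu w) x y z" unfolding ev_Cu F_def by (simp add: mult.assoc)
      also have "\<dots> = 0" by (rule ev0)
      finally show "(\<Sum>i0\<le>k. \<Sum>j0\<le>k. \<Sum>l0\<le>k. d i0 j0 l0 * (poly (Pb k a h i0) x * poly (Pb k b h j0) y * poly (Pb k c h l0) z)) = 0" .
    qed
    from indep3[OF k4 this] have d0: "\<forall>i0\<le>k. \<forall>j0\<le>k. \<forall>l0\<le>k. d i0 j0 l0 = 0" .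
    show ?thesis
    proof (intro allI impI)
      fix n assume n: "n < N"
      obtain i0 j0 l0 where t: "e n = (i0,j0,l0)" by (cases "e n") auto
      have le: "i0 \<le> k" "j0 \<le> k" "l0 \<le> k" using eA[OF n] Aset_sub unfolding t by auto
      have "d i0 j0 l0 = w n" unfolding d_def using n t[symmetric] by (auto simp: the_inv_into_f_f[OF e2])
      thus "w n = 0" using d0 le by auto
    qed
  qed
  define M where "M = mat N N (\<lambda>(i,n). (dofs k a b c h ! i) (ev k (B n)))"
  have Mc: "M \<in> carrier_mat N N" unfolding M_def by simp
  have Mv: "(M *\<^sub>v u) $ i = (dofs k a b c h ! i) (ev k (Cu (\<lambda>n. u $ n)))" if u: "u \<in> carrier_vec N" and i: "i < N" for u i
  proof -
    have "(M *\<^sub>v u) $ i = (\<Sum>n\<in>{0..<N}. M $$ (i,n) * u $ n)"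
      using u i Mc by (simp add: scalar_prod_def)
    also have "\<dots> = (\<Sum>n<N. u $ n * (dofs k a b c h ! i) (ev k (B n)))"
      by (simp add: M_def lessThan_atLeast0 mult.commute i)
    also have "\<dots> = (dofs k a b c h ! i) (ev k (Cu (\<lambda>n. u $ n)))"
      using dof_Cu[OF nth_mem[of i "dofs k a b c h"]] i unfolding N_def by simp
    finally show ?thesis .
  qed
  have det: "Determinant.det M \<noteq> 0"
  proof
    assume "Determinant.det M = 0"
    then obtain u where u: "u \<in> carrier_vec N" "u \<noteq> 0\<^sub>v N" "M *\<^sub>v u = 0\<^sub>v N"
      using det_0_iff_vec_prod_zero_field[OF Mc] by auto
    have "\<forall>i<N. (dofs k a b c h ! i) (ev k (Cu (\<lambda>n. u $ n))) = 0"
      using Mv[OF u(1)] u(3) by (metis index_zero_vec(1))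
    from inj[OF this] have "\<forall>n<N. u $ n = 0" .
    hence "u = 0\<^sub>v N" using u(1) by (intro eq_vecI) auto
    with u(2) show False by simp
  qed
  obtain Mi where Mi: "Mi \<in> carrier_mat N N" "M * Mi = 1\<^sub>m N"
    using det_non_zero_imp_unit[OF Mc det, of "()"] unfolding Units_def ring_mat_def by auto
  define u where "u = Mi *\<^sub>v vec N g"
  have uc: "u \<in> carrier_vec N" unfolding u_def using Mi(1) by simp
  have Mu: "M *\<^sub>v u = vec N g"
  proof -
    have "M *\<^sub>v u = (M * Mi) *\<^sub>v vec N g" unfolding u_def
      by (rule assoc_mult_mat_vec[symmetric, OF Mc Mi(1)]) simp
    thus ?thesis using Mi(2) by simp
  qed
  define v where "v = ev k (Cu (\<lambda>n. u $ n))"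
  have vsol: "\<forall>i<length (dofs k a b c h). (dofs k a b c h ! i) v = g i"
  proof (intro allI impI)
    fix i assume "i < length (dofs k a b c h)"
    hence i: "i < N" unfolding N_def .
    have "(dofs k a b c h ! i) v = (M *\<^sub>v u) $ i" using Mv[OF uc i] unfolding v_def by simp
    also have "\<dots> = g i" using Mu i by simp
    finally show "(dofs k a b c h ! i) v = g i" .
  qed
  show "\<exists>!v. v \<in> VT k a b c h \<and> (\<forall>i<length (dofs k a b c h). (dofs k a b c h ! i) v = g i)"
  proof (rule ex1I[of _ v])
    show "v \<in> VT k a b c h \<and> (\<forall>i<length (dofs k a b c h). (dofs k a b c h ! i) v = g i)"
      using VTu vsol unfolding v_def by blast
  next
    fix v' assume v': "v' \<in> VT k a b c h \<and> (\<forall>i<length (dofs k a b c h). (dofs k a b c h ! i) v' = g i)"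
    obtain C1 where C1: "v' = ev k C1" "CondX k C1 a" "CondX k C1 (a+h)" "CondY k C1 b" "CondY k C1 (b+h)"
      "CondZ k C1 c" "CondZ k C1 (c+h)"
      using VT_D[of v' k a b c h] v' h k4 by auto
    define G where "G n = (if n = 0 then C1 else Cu (\<lambda>n. u $ n))" for n :: nat
    define w where "w n = (if n = 0 then 1 else -1::real)" for n :: nat
    define Cd where "Cd = (\<lambda>i j l. \<Sum>n\<in>{0,1::nat}. w n * G n i j l)"
    have cG: "\<forall>n\<in>{0,1::nat}. CondX k (G n) a \<and> CondX k (G n) (a+h) \<and> CondY k (G n) b \<and> CondY k (G n) (b+h)
       \<and> CondZ k (G n) c \<and> CondZ k (G n) (c+h)"
      using C1 cu unfolding G_def by auto
    have cd1: "CondX k Cd a" "CondX k Cd (a+h)" unfolding Cd_def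
      by (rule condX_lin, use cG in blast)+
    have cd2: "CondY k Cd b" "CondY k Cd (b+h)" unfolding Cd_def
      by (rule condY_lin, use cG in blast)+
    have cd3: "CondZ k Cd c" "CondZ k Cd (c+h)" unfolding Cd_def
      by (rule condZ_lin, use cG in blast)+
    note cd = cd1 cd2 cd3
    have Zd: "\<forall>f\<in>set (dofs k a b c h). f (ev k Cd) = 0"
    proof
      fix f assume f: "f \<in> set (dofs k a b c h)"
      then obtain i where i: "i < length (dofs k a b c h)" "f = dofs k a b c h ! i"
        by (auto simp: in_set_conv_nth)
      have "f (ev k Cd) = (\<Sum>n\<in>{0,1::nat}. w n * f (ev k (G n)))"
        using dofs_Lin f unfolding Lin_def Cd_def by blast
      also have "\<dots> = f v' - f v" by (simp add: w_def G_def C1(1) v_def)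
      also have "\<dots> = 0" using v' vsol i by simp
      finally show "f (ev k Cd) = 0" .
    qed
    have "v' x y z - v x y z = 0" for x y z
    proof -
      have "ev k Cd x y z = (\<Sum>n\<in>{0,1::nat}. w n * ev k (G n) x y z)"
        unfolding Cd_def by (rule ev_lin) simp
      also have "\<dots> = v' x y z - v x y z" by (simp add: w_def G_def C1(1) v_def)
      finally have "ev k Cd x y z = v' x y z - v x y z" .
      moreover have "ev k Cd x y z = 0" by (rule uniq_coef[OF k4 h cd Zd])
      ultimately show ?thesis by simp
    qed
    thus "v' = v" by (intro ext) simp
  qed
qed

end
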